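(* Let $\Omega\subset\mathbb{R}^n$ be an open bounded domain with $\partial\Omega\in C^{2+\beta}$, $\beta>0$, let $r,a_1,a_2,P,Q,K$ be continuous and positive on $\overline\Omega$ with $a_1,a_2,P,Q\in C^2(\Omega)$, and consider the system $$\frac{\partial u}{\partial t}=\nabla\cdot\left[a_1\nabla\left(\frac{u}{P}\right)\right]+r u\left(1-\frac{u+v}{K}\right),\quad \frac{\partial v}{\partial t}=\nabla\cdot\left[a_2\nabla\left(\frac{v}{Q}\right)\right]+r v\left(1-\frac{u+v}{K}\right),$$ in $\Omega$, with $\partial(u/P)/\partial n=\partial(v/Q)/\partial n=0$ on $\partial\Omega$. Assume $P(x)/K(x)$ is constant on $\Omega$ and $Q$, $K$ are linearly independent on $\Omega$. Then the system has no coexistence equilibrium.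
   Context: A coexistence equilibrium is a pair of positive functions $(u_s,v_s)$ solving the stationary version of the system with the given boundary conditions. *)

theory Defs
  imports "HOL-Analysis.Analysis"
begin

definition grad :: "(real^'n \<Rightarrow> real) \<Rightarrow> real^'n \<Rightarrow> real^'n" where
  "grad f x = (\<chi> i. frechet_derivative f (at x) (axis i 1))"

definition divergence :: "(real^'n \<Rightarrow> real^'n) \<Rightarrow> real^'n \<Rightarrow> real" where
  "divergence F x = (\<Sum>i\<in>UNIV. frechet_derivative (\<lambda>y. F y $ i) (at x) (axis i 1))"

definition C1_on :: "(real^'n) set \<Rightarrow> (real^'n \<Rightarrow> real) \<Rightarrow> bool" where
  "C1_on S f \<longleftrightarrow> (\<forall>x\<in>S. f differentiable (at x)) \<and> continuous_on S (grad f)"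

definition C2_on :: "(real^'n) set \<Rightarrow> (real^'n \<Rightarrow> real) \<Rightarrow> bool" where
  "C2_on S f \<longleftrightarrow> C1_on S f \<and> (\<forall>i. C1_on S (\<lambda>y. grad f y $ i))"

definition C1_closure :: "(real^'n) set \<Rightarrow> (real^'n \<Rightarrow> real) \<Rightarrow> bool" where
  "C1_closure S f \<longleftrightarrow> (\<exists>G. continuous_on (closure S) G \<and>
      (\<forall>x\<in>closure S. (f has_derivative (\<lambda>h. G x \<bullet> h)) (at x within closure S)))"

definition dd :: "(real^'n \<Rightarrow> real) \<Rightarrow> 'n \<Rightarrow> 'n \<Rightarrow> real^'n \<Rightarrow> real" where
  "dd f i j x = grad (\<lambda>y. grad f y $ j) x $ i"

text \<open>\<open>\<rho>\<close> is a C^{2+\<beta>} defining function of \<Omega>: \<open>\<Omega> = {\<rho> < 0}\<close>, \<open>\<rho>\<close> is C^2,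
  its second derivatives are \<beta>-Hoelder continuous on a neighbourhood of the
  boundary, and \<open>\<nabla>\<rho> \<noteq> 0\<close> on \<open>{\<rho> = 0}\<close>. (For bounded domains this is the standard
  notion of a C^{2+\<beta>} boundary.)\<close>
definition C2beta_defining_fun :: "real \<Rightarrow> (real^'n) set \<Rightarrow> (real^'n \<Rightarrow> real) \<Rightarrow> bool" where
  "C2beta_defining_fun \<beta> \<Omega> \<rho> \<longleftrightarrow>
     C2_on UNIV \<rho> \<and> \<Omega> = {x. \<rho> x < 0} \<and>
     (\<forall>x. \<rho> x = 0 \<longrightarrow> grad \<rho> x \<noteq> 0) \<and>
     (\<exists>U C. open U \<and> frontier \<Omega> \<subseteq> U \<and>
        (\<forall>i j. \<forall>x\<in>U. \<forall>y\<in>U. \<bar>dd \<rho> i j x - dd \<rho> i j y\<bar> \<le> C * dist x y powr \<beta>))"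

definition normal :: "(real^'n \<Rightarrow> real) \<Rightarrow> real^'n \<Rightarrow> real^'n" where
  "normal \<rho> x = (1 / norm (grad \<rho> x)) *\<^sub>R grad \<rho> x"

definition coexistence_equilibrium ::
  "(real^'n) set \<Rightarrow> (real^'n \<Rightarrow> real) \<Rightarrow>
   (real^'n \<Rightarrow> real) \<Rightarrow> (real^'n \<Rightarrow> real) \<Rightarrow> (real^'n \<Rightarrow> real) \<Rightarrow>
   (real^'n \<Rightarrow> real) \<Rightarrow> (real^'n \<Rightarrow> real) \<Rightarrow> (real^'n \<Rightarrow> real) \<Rightarrow>
   (real^'n \<Rightarrow> real) \<Rightarrow> (real^'n \<Rightarrow> real) \<Rightarrow> bool" where
  "coexistence_equilibrium \<Omega> \<rho> r a1 a2 P Q K u v \<longleftrightarrow>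
     C2_on \<Omega> u \<and> C2_on \<Omega> v \<and>
     continuous_on (closure \<Omega>) u \<and> continuous_on (closure \<Omega>) v \<and>
     (\<forall>x\<in>closure \<Omega>. u x > 0 \<and> v x > 0) \<and>
     C1_closure \<Omega> (\<lambda>x. u x / P x) \<and> C1_closure \<Omega> (\<lambda>x. v x / Q x) \<and>
     (\<forall>x\<in>\<Omega>. divergence (\<lambda>y. a1 y *\<^sub>R grad (\<lambda>z. u z / P z) y) x
                + r x * u x * (1 - (u x + v x) / K x) = 0) \<and>
     (\<forall>x\<in>\<Omega>. divergence (\<lambda>y. a2 y *\<^sub>R grad (\<lambda>z. v z / Q z) y) x
                + r x * v x * (1 - (u x + v x) / K x) = 0) \<and>
     (\<forall>x\<in>frontier \<Omega>. \<exists>D. ((\<lambda>z. u z / P z) has_derivative D) (at x within closure \<Omega>)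
                          \<and> D (normal \<rho> x) = 0) \<and>
     (\<forall>x\<in>frontier \<Omega>. \<exists>D. ((\<lambda>z. v z / Q z) has_derivative D) (at x within closure \<Omega>)
                          \<and> D (normal \<rho> x) = 0)"

end

theory Submission
  imports Defs
begin



lemma linear_inner_grad:
  fixes f' :: "real^'n \<Rightarrow> real"
  assumes "linear f'"
  shows "f' h = (\<chi> i. f' (axis i 1)) \<bullet> h"
proof -
  have "f' h = f' (\<Sum>i\<in>UNIV. (h$i) *\<^sub>R axis i 1)"
    using basis_expansion[of h] by (simp add: scalar_mult_eq_scaleR)
  also have "\<dots> = (\<Sum>i\<in>UNIV. h$i * f' (axis i 1))"
    using assms by (simp add: linear_sum linear_scale)
  also have "\<dots> = (\<chi> i. f' (axis i 1)) \<bullet> h"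
    by (simp add: inner_vec_def mult.commute)
  finally show ?thesis .
qed

lemma grad_has:
  fixes f :: "real^'n \<Rightarrow> real"
  assumes "f differentiable (at x)"
  shows "(f has_derivative (\<lambda>h. grad f x \<bullet> h)) (at x)"
proof -
  have d: "(f has_derivative frechet_derivative f (at x)) (at x)"
    using assms frechet_derivative_works by blast
  then have "linear (frechet_derivative f (at x))" using has_derivative_linear by blast
  then have "frechet_derivative f (at x) = (\<lambda>h. grad f x \<bullet> h)"
    by (auto simp: grad_def intro!: ext linear_inner_grad)
  with d show ?thesis by simp
qed

lemma grad_unique:
  fixes f :: "real^'n \<Rightarrow> real"
  assumes "(f has_derivative (\<lambda>h. G \<bullet> h)) (at x)"
  shows "grad f x = G"
proof -
  have "frechet_derivative f (at x) = (\<lambda>h. G \<bullet> h)"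
    using frechet_derivative_at[OF assms] by simp
  then show ?thesis by (simp add: grad_def vec_eq_iff inner_axis)
qed

lemma grad_component:
  fixes f :: "real^'n \<Rightarrow> real"
  assumes "(f has_derivative f') (at x)"
  shows "grad f x $ i = f' (axis i 1)"
  using frechet_derivative_at[OF assms] by (simp add: grad_def)




lemma C1_diff: "C1_on S f \<Longrightarrow> x \<in> S \<Longrightarrow> f differentiable (at x)"
  by (simp add: C1_on_def)

lemma C1_has: "C1_on S f \<Longrightarrow> x \<in> S \<Longrightarrow> (f has_derivative (\<lambda>h. grad f x \<bullet> h)) (at x)"
  by (simp add: C1_on_def grad_has)

lemma C1_cont: "C1_on S f \<Longrightarrow> continuous_on S f"
  unfolding C1_on_def
  by (meson continuous_at_imp_continuous_on differentiable_imp_continuous_within)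

lemma C1_grad_cont: "C1_on S f \<Longrightarrow> continuous_on S (grad f)"
  by (simp add: C1_on_def)

lemma C1_gradc_cont: "C1_on S f \<Longrightarrow> continuous_on S (\<lambda>x. grad f x $ i)"
  unfolding C1_on_def by (auto intro: continuous_intros)

lemma grad_mult:
  fixes f g :: "real^'n \<Rightarrow> real"
  assumes "f differentiable (at x)" "g differentiable (at x)"
  shows "grad (\<lambda>y. f y * g y) x = f x *\<^sub>R grad g x + g x *\<^sub>R grad f x"
  apply (rule grad_unique)
  using has_derivative_mult[OF grad_has[OF assms(1)] grad_has[OF assms(2)]]
  by (simp add: algebra_simps inner_add_left)

lemma grad_add:
  fixes f g :: "real^'n \<Rightarrow> real"
  assumes "f differentiable (at x)" "g differentiable (at x)"
  shows "grad (\<lambda>y. f y + g y) x = grad f x + grad g x"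
  apply (rule grad_unique)
  using has_derivative_add[OF grad_has[OF assms(1)] grad_has[OF assms(2)]]
  by (simp add: algebra_simps inner_add_left)

lemma grad_inverse:
  fixes f :: "real^'n \<Rightarrow> real"
  assumes "f differentiable (at x)" "f x \<noteq> 0"
  shows "grad (\<lambda>y. inverse (f y)) x = (- inverse (f x ^ 2)) *\<^sub>R grad f x"
  apply (rule grad_unique)
  using Deriv.has_derivative_inverse[OF assms(2) grad_has[OF assms(1)]]
  by (simp add: algebra_simps power2_eq_square)

lemma C1_transform:
  assumes "open S" "\<And>x. x \<in> S \<Longrightarrow> f x = g x" "C1_on S f"
  shows "C1_on S g"
proof -
  have h: "(g has_derivative (\<lambda>h. grad f x \<bullet> h)) (at x)" if "x \<in> S" for x
    using has_derivative_transform_within_open[OF C1_has[OF assms(3) that] assms(1) that] assms(2)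
    by blast
  then have "grad g x = grad f x" if "x \<in> S" for x using grad_unique that by blast
  then have "continuous_on S (grad g)"
    using assms(3) unfolding C1_on_def by (auto intro: continuous_on_eq[where g="grad g"])
  then show ?thesis using h unfolding C1_on_def by (auto simp: differentiable_def)
qed

lemma C1_mult:
  assumes "C1_on S f" "C1_on S g"
  shows "C1_on S (\<lambda>x. f x * g x)"
proof -
  have "continuous_on S (\<lambda>x. f x *\<^sub>R grad g x + g x *\<^sub>R grad f x)"
    using assms by (intro continuous_intros C1_cont C1_grad_cont)
  moreover have e: "x \<in> S \<Longrightarrow> grad (\<lambda>y. f y * g y) x = f x *\<^sub>R grad g x + g x *\<^sub>R grad f x" for x
    using assms grad_mult C1_diff by blast
  ultimately have "continuous_on S (grad (\<lambda>y. f y * g y))" by (auto intro: continuous_on_eq[where g="grad (\<lambda>y. f y * g y)"] simp: e)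
  then show ?thesis using assms unfolding C1_on_def by (auto intro: C1_diff differentiable_mult)
qed

lemma C1_add:
  assumes "C1_on S f" "C1_on S g"
  shows "C1_on S (\<lambda>x. f x + g x)"
proof -
  have "continuous_on S (\<lambda>x. grad f x + grad g x)"
    using assms by (intro continuous_intros C1_cont C1_grad_cont)
  moreover have e: "x \<in> S \<Longrightarrow> grad (\<lambda>y. f y + g y) x = grad f x + grad g x" for x
    using assms grad_add C1_diff by blast
  ultimately have "continuous_on S (grad (\<lambda>y. f y + g y))" by (auto intro: continuous_on_eq[where g="grad (\<lambda>y. f y + g y)"] simp: e)
  then show ?thesis using assms unfolding C1_on_def by (auto intro: C1_diff differentiable_add)
qed

lemma C1_const: fixes S :: "(real^'n) set" shows "C1_on S (\<lambda>x. c)"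
proof -
  have "grad (\<lambda>x. c) x = 0" for x by (rule grad_unique) simp
  then have e: "grad (\<lambda>x. c) = (\<lambda>x. 0)" by (rule ext)
  show ?thesis unfolding C1_on_def e by simp
qed

lemma C1_inverse:
  assumes "C1_on S f" "\<And>x. x \<in> S \<Longrightarrow> f x \<noteq> 0"
  shows "C1_on S (\<lambda>x. inverse (f x))"
proof -
  have "continuous_on S (\<lambda>x. (- inverse (f x ^ 2)) *\<^sub>R grad f x)"
    using assms by (intro continuous_intros C1_cont C1_grad_cont) auto
  moreover have e: "x \<in> S \<Longrightarrow> grad (\<lambda>y. inverse (f y)) x = (- inverse (f x ^ 2)) *\<^sub>R grad f x" for x
    using assms grad_inverse C1_diff by blast
  ultimately have "continuous_on S (grad (\<lambda>y. inverse (f y)))" by (auto intro: continuous_on_eq[where g="grad (\<lambda>y. inverse (f y))"] simp: e)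
  then show ?thesis using assms unfolding C1_on_def by (auto intro: C1_diff differentiable_inverse)
qed

lemma C1_divide:
  assumes "C1_on S f" "C1_on S g" "\<And>x. x \<in> S \<Longrightarrow> g x \<noteq> 0"
  shows "C1_on S (\<lambda>x. f x / g x)"
  using C1_mult[OF assms(1) C1_inverse[OF assms(2,3)]] by (simp add: divide_inverse)

lemma C1_minus:
  assumes "C1_on S f" "C1_on S g"
  shows "C1_on S (\<lambda>x. f x - g x)"
  using C1_add[OF assms(1) C1_mult[OF C1_const[of S "-1"] assms(2)]] by simp

lemma grad_divide:
  fixes f g :: "real^'n \<Rightarrow> real"
  assumes "f differentiable (at x)" "g differentiable (at x)" "g x \<noteq> 0"
  shows "grad (\<lambda>y. f y / g y) x = (1 / g x ^ 2) *\<^sub>R (g x *\<^sub>R grad f x - f x *\<^sub>R grad g x)"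
proof -
  have "grad (\<lambda>y. f y * inverse (g y)) x = f x *\<^sub>R grad (\<lambda>y. inverse (g y)) x + inverse (g x) *\<^sub>R grad f x"
    using grad_mult[OF assms(1) differentiable_inverse[OF assms(2,3)]] by simp
  also have "\<dots> = (1 / g x ^ 2) *\<^sub>R (g x *\<^sub>R grad f x - f x *\<^sub>R grad g x)"
    using assms by (simp add: grad_inverse algebra_simps power2_eq_square divide_inverse)
  finally show ?thesis by (simp add: divide_inverse)
qed





lemma C2_C1: "C2_on S f \<Longrightarrow> C1_on S f" by (simp add: C2_on_def)
lemma C2_C1g: "C2_on S f \<Longrightarrow> C1_on S (\<lambda>y. grad f y $ i)" by (simp add: C2_on_def)

lemma C2_divide:
  assumes S: "open S" and u: "C2_on S u" and P: "C2_on S P" and nz: "\<And>x. x \<in> S \<Longrightarrow> P x \<noteq> 0"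
  shows "C2_on S (\<lambda>x. u x / P x)"
proof -
  have c1: "C1_on S (\<lambda>x. u x / P x)" using C1_divide[OF C2_C1[OF u] C2_C1[OF P] nz] .
  have "C1_on S (\<lambda>y. grad (\<lambda>x. u x / P x) y $ i)" for i
  proof (rule C1_transform[OF S])
    show "C1_on S (\<lambda>y. (P y * grad u y $ i - u y * grad P y $ i) / (P y * P y))"
      by (intro C1_divide C1_minus C1_mult C2_C1 C2_C1g u P) (use nz in auto)
    fix y assume y: "y \<in> S"
    show "(P y * grad u y $ i - u y * grad P y $ i) / (P y * P y) = grad (\<lambda>x. u x / P x) y $ i"
      unfolding grad_divide[OF C1_diff[OF C2_C1[OF u] y] C1_diff[OF C2_C1[OF P] y] nz[OF y]]
      by (simp add: power2_eq_square divide_simps)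
  qed
  then show ?thesis using c1 by (simp add: C2_on_def)
qed





definition psi :: "real \<Rightarrow> real" where
  "psi t = (if t \<le> 1 then 0 else if t \<ge> 2 then 1 else 3*(t-1)^2 - 2*(t-1)^3)"
definition dpsi :: "real \<Rightarrow> real" where
  "dpsi t = (if t \<le> 1 \<or> t \<ge> 2 then 0 else 6*(t-1)*(2-t))"

lemma DERIV_quad:
  fixes f :: "real \<Rightarrow> real"
  assumes "d > 0" "\<And>h. \<bar>h\<bar> < d \<Longrightarrow> \<bar>f (x+h) - f x - D*h\<bar> \<le> C*h^2"
  shows "DERIV f x :> D"
  unfolding DERIV_def LIM_eq
proof (intro allI impI)
  fix r :: real assume r: "r > 0"
  define s where "s = min d (r / (\<bar>C\<bar>+1))"
  have c1: "\<bar>C\<bar>+1 > 0" using abs_ge_zero[of C] by linarith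
  have rc: "r / (\<bar>C\<bar>+1) > 0" by (rule divide_pos_pos[OF r c1])
  have s: "s > 0" unfolding s_def using assms(1) rc by simp
  show "\<exists>s>0. \<forall>h. h \<noteq> 0 \<and> norm (h - 0) < s \<longrightarrow> norm ((f (x + h) - f x) / h - D) < r"
  proof (intro exI[of _ s] conjI allI impI s)
    fix h :: real assume h: "h \<noteq> 0 \<and> norm (h - 0) < s"
    have hs: "\<bar>h\<bar> < s" using h by simp
    have hd: "\<bar>h\<bar> < d" and hr0: "\<bar>h\<bar> < r / (\<bar>C\<bar>+1)" using hs unfolding s_def by simp_all
    have hp: "\<bar>h\<bar> > 0" using h by simp
    have hr: "\<bar>h\<bar> * (\<bar>C\<bar>+1) < r" using hr0 c1 by (simp add: less_divide_eq)
    have e: "(f (x + h) - f x) / h - D = (f (x+h) - f x - D*h) / h" using h by (simp add: field_simps)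
    have "\<bar>f (x+h) - f x - D*h\<bar> \<le> C*h^2" using assms(2)[OF hd] .
    also have "C*h^2 \<le> ((\<bar>C\<bar>+1)*\<bar>h\<bar>)*\<bar>h\<bar>"
    proof -
      have "h^2 = \<bar>h\<bar>*\<bar>h\<bar>" by (simp add: power2_eq_square)
      moreover have "C \<le> \<bar>C\<bar>+1" by simp
      ultimately show ?thesis by (simp add: mult_right_mono mult.assoc)
    qed
    also have "\<dots> < r * \<bar>h\<bar>" using hr hp by (simp add: mult.commute)
    finally have "\<bar>f (x+h) - f x - D*h\<bar> / \<bar>h\<bar> < r" using hp by (simp add: divide_less_eq)
    then show "norm ((f (x + h) - f x) / h - D) < r" unfolding e by (simp add: abs_divide)
  qed
qed




lemma psi_deriv: "DERIV psi t :> dpsi t"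
proof -
  consider "t < 1" | "t = 1" | "1 < t \<and> t < 2" | "t = 2" | "t > 2" by linarith
  then show ?thesis
  proof cases
    case 1
    have "DERIV (\<lambda>t. 0::real) t :> 0" by simp
    then have "DERIV psi t :> 0"
      by (rule has_field_derivative_transform_within_open[where S="{..<1}"]) (use 1 in \<open>auto simp: psi_def\<close>)
    then show ?thesis using 1 by (simp add: dpsi_def)
  next
    case 5
    have "DERIV (\<lambda>t. 1::real) t :> 0" by simp
    then have "DERIV psi t :> 0"
      by (rule has_field_derivative_transform_within_open[where S="{2<..}"]) (use 5 in \<open>auto simp: psi_def\<close>)
    then show ?thesis using 5 by (simp add: dpsi_def)
  next
    case 3
    have "DERIV (\<lambda>t. 3*(t-1)^2 - 2*(t-1)^3) t :> 3*(2*(t-1)) - 2*(3*(t-1)^2)"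
      by (auto intro!: derivative_eq_intros)
    then have "DERIV psi t :> 3*(2*(t-1)) - 2*(3*(t-1)^2)"
      by (rule has_field_derivative_transform_within_open[where S="{1<..<2}"]) (use 3 in \<open>auto simp: psi_def\<close>)
    moreover have "3*(2*(t-1)) - 2*(3*(t-1)^2) = dpsi t"
      using 3 unfolding dpsi_def by (simp add: power2_eq_square algebra_simps)
    ultimately show ?thesis by simp
  next
    case 2
    have "DERIV psi 1 :> 0"
    proof (rule DERIV_quad[where d=1 and C=3])
      fix h :: real assume h: "\<bar>h\<bar> < 1"
      show "\<bar>psi (1 + h) - psi 1 - 0 * h\<bar> \<le> 3 * h\<^sup>2"
      proof (cases "h \<le> 0")
        case False
        have e: "psi (1 + h) - psi 1 - 0 * h = h^2 * (3 - 2*h)" using False h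
          unfolding psi_def by (simp add: power2_eq_square power3_eq_cube algebra_simps)
        have "0 \<le> h^2 * (3 - 2*h)" using h by simp
        moreover have "h^2 * (3 - 2*h) \<le> 3*h^2" using False by (simp add: algebra_simps)
        ultimately show ?thesis unfolding e by simp
      qed (simp add: psi_def)
    qed simp
    then show ?thesis using 2 by (simp add: dpsi_def)
  next
    case 4
    have "DERIV psi 2 :> 0"
    proof (rule DERIV_quad[where d=1 and C=5])
      fix h :: real assume h: "\<bar>h\<bar> < 1"
      show "\<bar>psi (2 + h) - psi 2 - 0 * h\<bar> \<le> 5 * h\<^sup>2"
      proof (cases "h < 0")
        case True
        have e: "psi (2 + h) - psi 2 - 0 * h = - (h^2 * (3 + 2*h))" using True h
          unfolding psi_def by (simp add: power2_eq_square power3_eq_cube algebra_simps)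
        have "0 \<le> h^2 * (3 + 2*h)" using h by simp
        moreover have "h^2 * (3 + 2*h) \<le> h^2 * 5" using h by (intro mult_left_mono) auto
        ultimately show ?thesis unfolding e by simp
      qed (simp add: psi_def)
    qed simp
    then show ?thesis using 4 by (simp add: dpsi_def)
  qed
qed

lemma psi_cont: "continuous_on UNIV psi"
  using psi_deriv by (meson DERIV_isCont continuous_at_imp_continuous_on)

lemma dpsi_eq: "dpsi t = max 0 (6*(t-1)*(2-t))"
proof (cases "t \<le> 1 \<or> t \<ge> 2")
  case True
  then have "6*(t-1)*(2-t) \<le> 0"
  proof
    assume "t \<le> 1" then show ?thesis by (simp add: mult_nonpos_nonneg)
  next
    assume "t \<ge> 2" then show ?thesis by (simp add: mult_nonneg_nonpos)
  qed
  then show ?thesis using True by (simp add: dpsi_def)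
next
  case False
  then have "6*(t-1)*(2-t) \<ge> 0" by simp
  then show ?thesis using False by (simp add: dpsi_def)
qed

lemma dpsi_cont: "continuous_on UNIV dpsi"
proof -
  have e: "dpsi = (\<lambda>t. max 0 (6*(t-1)*(2-t)))" by (rule ext) (rule dpsi_eq)
  show ?thesis unfolding e by (auto intro!: continuous_intros)
qed

lemma psi_range: "0 \<le> psi t \<and> psi t \<le> 1"
proof (cases "t \<le> 1 \<or> t \<ge> 2")
  case True then show ?thesis by (auto simp: psi_def)
next
  case False
  define y where "y = t - 1"
  have y: "0 < y" "y < 1" using False by (auto simp: y_def)
  have e: "psi t = y^2 * (3 - 2*y)" using False unfolding psi_def y_def
    by (simp add: power2_eq_square power3_eq_cube algebra_simps)
  have e2: "1 - y^2 * (3 - 2*y) = (1-y)^2 * (1 + 2*y)"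
    by (simp add: power2_eq_square algebra_simps)
  have "0 \<le> y^2 * (3 - 2*y)" using y by simp
  moreover have "0 \<le> (1-y)^2 * (1 + 2*y)" using y by simp
  ultimately show ?thesis unfolding e using e2 by linarith
qed

lemma dpsi_nonneg: "dpsi t \<ge> 0"
  by (simp add: dpsi_eq)

lemma psi_zero: "t \<le> 1 \<Longrightarrow> psi t = 0" and dpsi_zero: "t \<le> 1 \<Longrightarrow> dpsi t = 0"
  and psi_one: "t \<ge> 2 \<Longrightarrow> psi t = 1"
  by (auto simp: psi_def dpsi_def)




lemma in_box_if_norm:
  fixes y :: "real^'n"
  assumes "norm y \<le> M"
  shows "y \<in> cbox (\<chi> j. - M) (\<chi> j. M)"
  unfolding mem_box_cart using component_le_norm_cart[of y] assms
  by (auto simp: abs_le_iff) (smt (verit) component_le_norm_cart)+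

lemma deriv_zero_outside:
  fixes g :: "real^'n \<Rightarrow> real"
  assumes K: "compact K" and der: "(g has_derivative (\<lambda>h. G \<bullet> h)) (at x)"
    and zero: "\<And>x. x \<notin> K \<Longrightarrow> g x = 0" and x: "x \<notin> K"
  shows "G = 0"
proof -
  have o: "open (- K)" using K by (simp add: compact_imp_closed open_Compl)
  have "((\<lambda>x. 0) has_derivative (\<lambda>h. 0)) (at x)" by simp
  then have "(g has_derivative (\<lambda>h. 0)) (at x)"
    by (rule has_derivative_transform_within_open[OF _ o]) (use x zero in auto)
  then have "(\<lambda>h. G \<bullet> h) = (\<lambda>h. 0)" using der has_derivative_unique by blast
  then have "G \<bullet> G = 0" by meson
  then show ?thesis by simp
qed

lemma no_boundary:
  fixes g :: "real^'n \<Rightarrow> real" and Dg :: "real^'n \<Rightarrow> real^'n"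
  assumes K: "compact K"
    and der: "\<And>x. (g has_derivative (\<lambda>h. Dg x \<bullet> h)) (at x)"
    and zero: "\<And>x. x \<notin> K \<Longrightarrow> g x = 0"
    and cont: "continuous_on UNIV (\<lambda>x. Dg x $ i)"
  shows "((\<lambda>x. Dg x $ i) has_integral 0) UNIV"
proof -
  obtain R where R: "R > 0" "\<And>x. x \<in> K \<Longrightarrow> norm x \<le> R"
    using compact_imp_bounded[OF K] unfolding bounded_pos by blast
  define B where "B = cbox (\<chi> j. - (R+1)) (\<chi> j::'n. R+1)"
  define B2 where "B2 = cbox (\<chi> j. - (R+3)) (\<chi> j::'n. R+3)"
  define e :: "real^'n" where "e = axis i 1"
  define U where "U = {-1<..<(1::real)}"
  have ne: "norm e = 1" by (simp add: e_def)
  have gc: "continuous_on UNIV g"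
    using der by (meson continuous_at_imp_continuous_on differentiable_def differentiable_imp_continuous_within)
  have Dz: "Dg x = 0" if "x \<notin> K" for x using deriv_zero_outside[OF K der zero that] .
  have KB: "K \<subseteq> B"
  proof
    fix x assume "x \<in> K"
    then have "norm x \<le> R + 1" using R by force
    then show "x \<in> B" unfolding B_def by (rule in_box_if_norm)
  qed
  have shift_out: "g (t + s *\<^sub>R e) = 0" if "t \<notin> B" "s \<in> U" for t s
  proof (rule zero, rule notI)
    assume "t + s *\<^sub>R e \<in> K"
    then have "norm (t + s *\<^sub>R e) \<le> R" using R by blast
    moreover have "norm (s *\<^sub>R e) \<le> 1" using that(2) ne by (simp add: U_def abs_le_iff)
    ultimately have "norm t \<le> R + 1" using norm_triangle_ineq4[of "t + s *\<^sub>R e" "s *\<^sub>R e"] by simp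
    then show False using that(1) unfolding B_def by (auto dest: in_box_if_norm)
  qed
  have gint: "g integrable_on B2" unfolding B2_def
    by (rule integrable_continuous) (use gc continuous_on_subset in blast)
  define J where "J = integral B2 g"
  have Ishift: "integral B (\<lambda>t. g (t + s *\<^sub>R e)) = J" if s: "s \<in> U" for s
  proof -
    have "(g has_integral J) B2" unfolding J_def by (rule integrable_integral[OF gint])
    from has_integral_affinity[OF this[unfolded B2_def], of 1 "s *\<^sub>R e"]
    have h1: "((\<lambda>t. g (t + s *\<^sub>R e)) has_integral J) ((\<lambda>x. x - s *\<^sub>R e) ` B2)"
      by (simp add: B2_def)
    have c: "continuous_on B (\<lambda>t. g (t + s *\<^sub>R e))"
      by (intro continuous_on_compose2[OF gc] continuous_intros) auto
    have h2: "((\<lambda>t. g (t + s *\<^sub>R e)) has_integral integral B (\<lambda>t. g (t + s *\<^sub>R e))) B"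
      using integrable_continuous[OF c[unfolded B_def]] unfolding B_def by (rule integrable_integral)
    have sub: "B \<subseteq> (\<lambda>x. x - s *\<^sub>R e) ` B2"
    proof
      fix t assume t: "t \<in> B"
      have "t + s *\<^sub>R e \<in> B2"
        using t s unfolding B_def B2_def U_def mem_box_cart e_def
        by (auto simp: axis_def) (smt (verit))+
      then show "t \<in> (\<lambda>x. x - s *\<^sub>R e) ` B2" by (auto intro: image_eqI[where x="t + s *\<^sub>R e"])
    qed
    have "((\<lambda>t. g (t + s *\<^sub>R e)) has_integral integral B (\<lambda>t. g (t + s *\<^sub>R e))) ((\<lambda>x. x - s *\<^sub>R e) ` B2)"
      by (rule has_integral_on_superset[OF h2 _ sub]) (use shift_out s in auto)
    then show ?thesis using h1 has_integral_unique by blast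
  qed
  have L: "((\<lambda>s. integral B (\<lambda>t. g (t + s *\<^sub>R e))) has_field_derivative integral B (\<lambda>t. Dg (t + 0 *\<^sub>R e) $ i)) (at 0 within U)"
    unfolding B_def
  proof (rule leibniz_rule_field_derivative[where fx="\<lambda>s t. Dg (t + s *\<^sub>R e) $ i"])
    fix s t
    have "((\<lambda>s. t + s *\<^sub>R e) has_derivative (\<lambda>h. h *\<^sub>R e)) (at s within U)"
      by (auto intro!: derivative_eq_intros)
    from has_derivative_compose[OF this der]
    have "((\<lambda>s. g (t + s *\<^sub>R e)) has_derivative (\<lambda>h. Dg (t + s *\<^sub>R e) \<bullet> (h *\<^sub>R e))) (at s within U)"
      by (simp add: o_def)
    moreover have "(\<lambda>h. Dg (t + s *\<^sub>R e) \<bullet> (h *\<^sub>R e)) = (*) (Dg (t + s *\<^sub>R e) $ i)"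
      by (auto simp: e_def inner_axis)
    ultimately show "((\<lambda>s. g (t + s *\<^sub>R e)) has_field_derivative Dg (t + s *\<^sub>R e) $ i) (at s within U)"
      by (simp add: has_field_derivative_def)
  next
    fix s
    show "(\<lambda>t. g (t + s *\<^sub>R e)) integrable_on cbox (\<chi> j. - (R + 1)) (\<chi> j. R + 1)"
      by (rule integrable_continuous, intro continuous_on_compose2[OF gc] continuous_intros) auto
  next
    have "continuous_on (U \<times> cbox (\<chi> j. - (R + 1)) (\<chi> j. R + 1)) (\<lambda>p. Dg (snd p + fst p *\<^sub>R e) $ i)"
      by (intro continuous_on_compose2[OF cont] continuous_intros) auto
    then show "continuous_on (U \<times> cbox (\<chi> j. - (R + 1)) (\<chi> j. R + 1)) (\<lambda>(s, t). Dg (t + s *\<^sub>R e) $ i)"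
      by (simp add: case_prod_unfold)
  qed (auto simp: U_def)
  have L0: "((\<lambda>s. integral B (\<lambda>t. g (t + s *\<^sub>R e))) has_field_derivative 0) (at 0 within U)"
  proof (rule has_field_derivative_transform_within[where f="\<lambda>s. J" and d=1])
    show "((\<lambda>s. J) has_field_derivative 0) (at 0 within U)" by simp
  qed (use Ishift in \<open>auto simp: U_def\<close>)
  have "at (0::real) within U = at 0" unfolding U_def by (rule at_within_open) auto
  then have "integral B (\<lambda>t. Dg t $ i) = 0"
    using DERIV_unique L L0 by fastforce
  moreover have "(\<lambda>t. Dg t $ i) integrable_on B" unfolding B_def
    by (rule integrable_continuous) (use cont continuous_on_subset in blast)
  ultimately have "((\<lambda>t. Dg t $ i) has_integral 0) B" by (simp add: has_integral_integral)
  then show ?thesis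
    by (rule has_integral_on_superset) (use Dz KB in force)+
qed




lemma chi_deriv:
  fixes \<rho> :: "real^'n \<Rightarrow> real"
  assumes "\<rho> differentiable (at x)" and "\<epsilon> > 0"
  shows "((\<lambda>y. psi (- \<rho> y / \<epsilon>)) has_derivative
           (\<lambda>h. (dpsi (- \<rho> x / \<epsilon>) * (-1/\<epsilon>)) * (grad \<rho> x \<bullet> h))) (at x)"
proof -
  have i: "((\<lambda>y. - \<rho> y / \<epsilon>) has_derivative (\<lambda>h. - (grad \<rho> x \<bullet> h) / \<epsilon>)) (at x)"
    using grad_has[OF assms(1)] assms(2) by (auto intro!: derivative_eq_intros)
  have o: "(psi has_derivative (*) (dpsi (- \<rho> x / \<epsilon>))) (at (- \<rho> x / \<epsilon>))"
    using psi_deriv by (simp add: has_field_derivative_def)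
  from has_derivative_compose[OF i o]
  have "((\<lambda>y. psi (- \<rho> y / \<epsilon>)) has_derivative (\<lambda>h. dpsi (- \<rho> x / \<epsilon>) * (- (grad \<rho> x \<bullet> h) / \<epsilon>))) (at x)"
    by (simp add: o_def)
  moreover have "(\<lambda>h. dpsi (- \<rho> x / \<epsilon>) * (- (grad \<rho> x \<bullet> h) / \<epsilon>)) = (\<lambda>h. (dpsi (- \<rho> x / \<epsilon>) * (-1/\<epsilon>)) * (grad \<rho> x \<bullet> h))"
    by (rule ext) simp
  ultimately show ?thesis by simp
qed

lemma ident:
  fixes \<rho> :: "real^'n \<Rightarrow> real" and H :: "real^'n \<Rightarrow> real^'n"
  assumes \<Omega>: "\<Omega> = {x. \<rho> x < 0}" and bd: "bounded \<Omega>"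
    and \<rho>: "C1_on UNIV \<rho>"
    and H: "\<And>i. C1_on \<Omega> (\<lambda>y. H y $ i)"
    and \<epsilon>: "\<epsilon> > 0"
  shows "((\<lambda>x. psi (- \<rho> x / \<epsilon>) * (\<Sum>i\<in>UNIV. grad (\<lambda>y. H y $ i) x $ i)
              - dpsi (- \<rho> x / \<epsilon>) / \<epsilon> * (grad \<rho> x \<bullet> H x)) has_integral 0) \<Omega>"
proof -
  have \<rho>c: "continuous_on UNIV \<rho>" using C1_cont[OF \<rho>] .
  have \<rho>d: "\<rho> differentiable (at x)" for x using C1_diff[OF \<rho>] by blast
  have op: "open \<Omega>" unfolding \<Omega> using \<rho>c by (simp add: open_Collect_less)
  define V where "V = {x. - \<epsilon> < \<rho> x}"
  have opV: "open V" unfolding V_def using \<rho>c by (simp add: open_Collect_less)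
  define K where "K = {x. \<rho> x \<le> - \<epsilon>}"
  have Kc: "compact K"
  unfolding compact_eq_bounded_closed proof
    show "bounded K" by (rule bounded_subset[OF bd]) (use \<epsilon> in \<open>auto simp: K_def \<Omega>\<close>)
    show "closed K" unfolding K_def using \<rho>c by (simp add: closed_Collect_le)
  qed
  have UV: "x \<in> \<Omega> \<or> x \<in> V" for x using \<epsilon> by (auto simp: \<Omega> V_def)
  have psiV: "psi (- \<rho> x / \<epsilon>) = 0" "dpsi (- \<rho> x / \<epsilon>) = 0" if "x \<in> V" for x
  proof -
    have "- \<rho> x \<le> 1 * \<epsilon>" using that by (simp add: V_def)
    then have "- \<rho> x / \<epsilon> \<le> 1" using \<epsilon> by (simp only: divide_le_eq) simp
    then show "psi (- \<rho> x / \<epsilon>) = 0" "dpsi (- \<rho> x / \<epsilon>) = 0" by (simp_all add: psi_zero dpsi_zero)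
  qed
  have psiV': "psi (- (\<rho> x / \<epsilon>)) = 0" "dpsi (- (\<rho> x / \<epsilon>)) = 0" if "x \<in> V" for x
    using psiV[OF that] by simp_all
  define g where "g i x = (if x \<in> \<Omega> then psi (- \<rho> x / \<epsilon>) * H x $ i else 0)" for i x
  define Dg where "Dg i x = (if x \<in> \<Omega> then psi (- \<rho> x / \<epsilon>) *\<^sub>R grad (\<lambda>y. H y $ i) x
      + (H x $ i * (dpsi (- \<rho> x / \<epsilon>) * (-1/\<epsilon>))) *\<^sub>R grad \<rho> x else 0)" for i x
  have int_i: "((\<lambda>x. Dg i x $ i) has_integral 0) UNIV" for i
  proof (rule no_boundary[OF Kc, where g="g i"])
    fix x
    show "(g i has_derivative (\<lambda>h. Dg i x \<bullet> h)) (at x)"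
    proof (cases "x \<in> \<Omega>")
      case True
      have "((\<lambda>y. psi (- \<rho> y / \<epsilon>) * H y $ i) has_derivative
         (\<lambda>h. psi (- \<rho> x / \<epsilon>) * (grad (\<lambda>y. H y $ i) x \<bullet> h)
              + (dpsi (- \<rho> x / \<epsilon>) * (-1/\<epsilon>)) * (grad \<rho> x \<bullet> h) * H x $ i)) (at x)"
        using has_derivative_mult[OF chi_deriv[OF \<rho>d \<epsilon>] C1_has[OF H True]] by simp
      then have "(g i has_derivative
         (\<lambda>h. psi (- \<rho> x / \<epsilon>) * (grad (\<lambda>y. H y $ i) x \<bullet> h)
              + (dpsi (- \<rho> x / \<epsilon>) * (-1/\<epsilon>)) * (grad \<rho> x \<bullet> h) * H x $ i)) (at x)"
        by (rule has_derivative_transform_within_open[OF _ op True]) (simp add: g_def)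
      moreover have "(\<lambda>h. psi (- \<rho> x / \<epsilon>) * (grad (\<lambda>y. H y $ i) x \<bullet> h)
              + (dpsi (- \<rho> x / \<epsilon>) * (-1/\<epsilon>)) * (grad \<rho> x \<bullet> h) * H x $ i) = (\<lambda>h. Dg i x \<bullet> h)"
        using True by (auto simp: Dg_def inner_add_left algebra_simps intro!: ext)
      ultimately show ?thesis by simp
    next
      case False
      then have xV: "x \<in> V" using UV by blast
      have "((\<lambda>y. 0) has_derivative (\<lambda>h. 0)) (at x)" by simp
      then have "(g i has_derivative (\<lambda>h. 0)) (at x)"
        by (rule has_derivative_transform_within_open[OF _ opV xV]) (simp add: g_def psiV psiV')
      moreover have "Dg i x = 0" using False by (simp add: Dg_def)
      ultimately show ?thesis by simp
    qed
  next
    fix x assume "x \<notin> K"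
    then have "x \<in> V" by (auto simp: K_def V_def)
    then show "g i x = 0" by (simp add: g_def psiV psiV')
  next
    have c\<Omega>: "continuous_on \<Omega> (\<lambda>x. Dg i x $ i)"
    proof -
      have "continuous_on \<Omega> (\<lambda>x. psi (- \<rho> x / \<epsilon>) * grad (\<lambda>y. H y $ i) x $ i
          + (H x $ i * (dpsi (- \<rho> x / \<epsilon>) * (-1/\<epsilon>))) * grad \<rho> x $ i)"
      proof -
        have cr: "continuous_on \<Omega> (\<lambda>x. - \<rho> x / \<epsilon>)"
          by (intro continuous_intros continuous_on_subset[OF \<rho>c]) (use \<epsilon> in auto)
        have cpsi: "continuous_on \<Omega> (\<lambda>x. psi (- \<rho> x / \<epsilon>))"
          by (rule continuous_on_compose2[OF psi_cont cr]) auto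
        have cdpsi: "continuous_on \<Omega> (\<lambda>x. dpsi (- \<rho> x / \<epsilon>))"
          by (rule continuous_on_compose2[OF dpsi_cont cr]) auto
        have cgr: "continuous_on \<Omega> (\<lambda>x. grad \<rho> x $ i)"
          by (rule continuous_on_subset[OF C1_gradc_cont[OF \<rho>]]) auto
        show ?thesis
          by (intro continuous_on_add continuous_on_mult cpsi cdpsi cgr continuous_on_const
               C1_gradc_cont[OF H] C1_cont[OF H])
      qed
      then show ?thesis by (rule continuous_on_eq) (simp add: Dg_def)
    qed
    have cV: "continuous_on V (\<lambda>x. Dg i x $ i)"
    proof -
      have "continuous_on V (\<lambda>x. 0::real)" by simp
      then show ?thesis by (rule continuous_on_eq) (simp add: Dg_def psiV psiV')
    qed
    show "continuous_on UNIV (\<lambda>x. Dg i x $ i)"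
    proof (rule continuous_at_imp_continuous_on, rule ballI)
      fix x :: "real^'n"
      show "isCont (\<lambda>x. Dg i x $ i) x"
        using UV[of x] c\<Omega> cV op opV continuous_on_eq_continuous_at by blast
    qed
  qed
  have "((\<lambda>x. \<Sum>i\<in>UNIV. Dg i x $ i) has_integral (\<Sum>i\<in>UNIV. 0)) UNIV"
    using has_integral_sum[of UNIV "\<lambda>i x. Dg i x $ i" "\<lambda>i. 0" UNIV] int_i by simp
  moreover have "(\<Sum>i\<in>UNIV. Dg i x $ i) = (if x \<in> \<Omega> then psi (- \<rho> x / \<epsilon>) * (\<Sum>i\<in>UNIV. grad (\<lambda>y. H y $ i) x $ i)
              - dpsi (- \<rho> x / \<epsilon>) / \<epsilon> * (grad \<rho> x \<bullet> H x) else 0)" for x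
  proof (cases "x \<in> \<Omega>")
    case True
    have "Dg i x $ i = psi (- \<rho> x / \<epsilon>) * grad (\<lambda>y. H y $ i) x $ i
        - dpsi (- \<rho> x / \<epsilon>) / \<epsilon> * (grad \<rho> x $ i * H x $ i)" for i
      using True by (simp add: Dg_def)
    then have "(\<Sum>i\<in>UNIV. Dg i x $ i) = (\<Sum>i\<in>UNIV. psi (- \<rho> x / \<epsilon>) * grad (\<lambda>y. H y $ i) x $ i)
        - (\<Sum>i\<in>UNIV. dpsi (- \<rho> x / \<epsilon>) / \<epsilon> * (grad \<rho> x $ i * H x $ i))"
      by (simp add: sum_subtractf)
    also have "\<dots> = psi (- \<rho> x / \<epsilon>) * (\<Sum>i\<in>UNIV. grad (\<lambda>y. H y $ i) x $ i)
        - dpsi (- \<rho> x / \<epsilon>) / \<epsilon> * (grad \<rho> x \<bullet> H x)"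
      by (simp only: sum_distrib_left[symmetric] inner_vec_def inner_real_def)
    finally show ?thesis using True by simp
  qed (simp add: Dg_def)
  ultimately have "((\<lambda>x. if x \<in> \<Omega> then psi (- \<rho> x / \<epsilon>) * (\<Sum>i\<in>UNIV. grad (\<lambda>y. H y $ i) x $ i)
              - dpsi (- \<rho> x / \<epsilon>) / \<epsilon> * (grad \<rho> x \<bullet> H x) else 0) has_integral 0) UNIV"
    by simp
  then show ?thesis by (simp add: has_integral_restrict_UNIV)
qed




lemma int_bdd:
  fixes f :: "real^'n \<Rightarrow> real"
  assumes "open S" "bounded S" "continuous_on S f" "\<And>x. x \<in> S \<Longrightarrow> \<bar>f x\<bar> \<le> M"
  shows "f integrable_on S"
proof -
  have S: "S \<in> lmeasurable" using lmeasurable_open assms by blast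
  have "f \<in> borel_measurable (lebesgue_on S)"
    using continuous_imp_measurable_on_sets_lebesgue[OF assms(3)] S by blast
  moreover have "(\<lambda>x. M) integrable_on S" using integrable_on_const[OF S] .
  ultimately show ?thesis
    using measurable_bounded_by_integrable_imp_integrable_real assms(4) S by blast
qed

lemma bdd_closure:
  fixes f :: "real^'n \<Rightarrow> real"
  assumes "bounded S" "continuous_on (closure S) f"
  shows "\<exists>M. \<forall>x\<in>closure S. \<bar>f x\<bar> \<le> M"
proof -
  have "compact (f ` closure S)"
    using assms by (intro compact_continuous_image) auto
  then have "bounded (f ` closure S)" by (rule compact_imp_bounded)
  then show ?thesis unfolding bounded_iff by auto
qed

lemma C1_subset: "C1_on S f \<Longrightarrow> T \<subseteq> S \<Longrightarrow> C1_on T f"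
  unfolding C1_on_def by (auto intro: continuous_on_subset)

lemma near_boundary:
  fixes \<rho> :: "real^'n \<Rightarrow> real" and Hc :: "real^'n \<Rightarrow> real^'n"
  assumes op: "open \<Omega>" and bd: "bounded \<Omega>" and \<Omega>: "\<Omega> = {x. \<rho> x < 0}"
    and \<rho>c: "continuous_on UNIV \<rho>" and g\<rho>c: "continuous_on UNIV (grad \<rho>)"
    and nz: "\<And>x. \<rho> x = 0 \<Longrightarrow> grad \<rho> x \<noteq> 0"
    and Hc: "continuous_on (closure \<Omega>) Hc"
    and bc: "\<And>x. x \<in> frontier \<Omega> \<Longrightarrow> Hc x \<bullet> grad \<rho> x = 0"
    and \<delta>: "\<delta> > 0"
  shows "\<exists>e>0. \<forall>x\<in>\<Omega>. \<rho> x > - e \<longrightarrow> \<bar>Hc x \<bullet> grad \<rho> x\<bar> \<le> \<delta> * (grad \<rho> x \<bullet> grad \<rho> x)"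
proof -
  define C where "C = {x \<in> closure \<Omega>. \<delta> * (grad \<rho> x \<bullet> grad \<rho> x) \<le> \<bar>Hc x \<bullet> grad \<rho> x\<bar>}"
  have cl: "closed C" unfolding C_def
    by (intro continuous_on_closed_Collect_le continuous_intros Hc continuous_on_subset[OF g\<rho>c]) auto
  have cp: "compact C"
  proof -
    have "C = closure \<Omega> \<inter> C" by (auto simp: C_def)
    moreover have "compact (closure \<Omega> \<inter> C)" by (rule compact_Int_closed) (use bd cl in auto)
    ultimately show ?thesis by simp
  qed
  have sub: "C \<subseteq> \<Omega>"
  proof
    fix x assume x: "x \<in> C"
    show "x \<in> \<Omega>"
    proof (rule ccontr)
      assume "x \<notin> \<Omega>"
      then have fr: "x \<in> frontier \<Omega>" using x op by (auto simp: C_def frontier_def interior_open)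
      have "closure \<Omega> \<subseteq> {x. \<rho> x \<le> 0}"
        by (rule closure_minimal) (auto simp: \<Omega> closed_Collect_le[OF \<rho>c continuous_on_const])
      then have "\<rho> x = 0" using fr \<open>x \<notin> \<Omega>\<close> by (auto simp: frontier_def \<Omega>)
      then have "grad \<rho> x \<bullet> grad \<rho> x > 0" using nz by simp
      then have "\<delta> * (grad \<rho> x \<bullet> grad \<rho> x) > 0" using \<delta> by simp
      then show False using x bc[OF fr] by (simp add: C_def)
    qed
  qed
  show ?thesis
  proof (cases "C = {}")
    case True
    show ?thesis
    proof (intro exI[of _ 1] conjI ballI impI)
      fix x assume "x \<in> \<Omega>"
      then have "x \<notin> C" "x \<in> closure \<Omega>" using True closure_subset by auto
      then show "\<bar>Hc x \<bullet> grad \<rho> x\<bar> \<le> \<delta> * (grad \<rho> x \<bullet> grad \<rho> x)" by (auto simp: C_def)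
    qed simp
  next
    case False
    obtain m where m: "m \<in> C" "\<And>y. y \<in> C \<Longrightarrow> \<rho> y \<le> \<rho> m"
      using compact_attains_sup[OF compact_continuous_image[OF continuous_on_subset[OF \<rho>c] cp] ] False
      by auto
    have neg: "\<rho> m < 0" using m(1) sub \<Omega> by auto
    show ?thesis
    proof (intro exI[of _ "- \<rho> m"] conjI ballI impI)
      fix x assume x: "x \<in> \<Omega>" "- (- \<rho> m) < \<rho> x"
      then have "x \<notin> C" using m(2) by force
      then show "\<bar>Hc x \<bullet> grad \<rho> x\<bar> \<le> \<delta> * (grad \<rho> x \<bullet> grad \<rho> x)"
        using x closure_subset by (auto simp: C_def)
    qed (use neg in simp)
  qed
qed





lemma divthm:
  fixes \<rho> :: "real^'n \<Rightarrow> real" and H Hc :: "real^'n \<Rightarrow> real^'n"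
  assumes \<Omega>: "\<Omega> = {x. \<rho> x < 0}" and bd: "bounded \<Omega>"
    and \<rho>: "C1_on UNIV \<rho>" and \<rho>2: "\<And>i. C1_on UNIV (\<lambda>y. grad \<rho> y $ i)"
    and nz: "\<And>x. \<rho> x = 0 \<Longrightarrow> grad \<rho> x \<noteq> 0"
    and H: "\<And>i. C1_on \<Omega> (\<lambda>y. H y $ i)"
    and Hc: "continuous_on (closure \<Omega>) Hc" and HHc: "\<And>x. x \<in> \<Omega> \<Longrightarrow> H x = Hc x"
    and bc: "\<And>x. x \<in> frontier \<Omega> \<Longrightarrow> Hc x \<bullet> grad \<rho> x = 0"
    and divb: "\<And>x. x \<in> \<Omega> \<Longrightarrow> \<bar>\<Sum>i\<in>UNIV. grad (\<lambda>y. H y $ i) x $ i\<bar> \<le> M"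
  shows "((\<lambda>x. \<Sum>i\<in>UNIV. grad (\<lambda>y. H y $ i) x $ i) has_integral 0) \<Omega>"
proof -
  define dv where "dv x = (\<Sum>i\<in>UNIV. grad (\<lambda>y. H y $ i) x $ i)" for x
  define L0 where "L0 x = (\<Sum>i\<in>UNIV. grad (\<lambda>y. grad \<rho> y $ i) x $ i)" for x
  have \<rho>c: "continuous_on UNIV \<rho>" using C1_cont[OF \<rho>] .
  have g\<rho>c: "continuous_on UNIV (grad \<rho>)" using C1_grad_cont[OF \<rho>] .
  have op: "open \<Omega>" unfolding \<Omega> using \<rho>c by (simp add: open_Collect_less)
  have dvc: "continuous_on \<Omega> dv" unfolding dv_def
    by (intro continuous_on_sum C1_gradc_cont[OF H])
  have L0c: "continuous_on UNIV L0" unfolding L0_def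
    by (intro continuous_on_sum C1_gradc_cont[OF \<rho>2])
  obtain Mb where Mb: "\<And>x. x \<in> closure \<Omega> \<Longrightarrow> \<bar>L0 x\<bar> \<le> Mb"
    using bdd_closure[OF bd continuous_on_subset[OF L0c]] by blast
  have Mb': "\<And>x. x \<in> \<Omega> \<Longrightarrow> \<bar>L0 x\<bar> \<le> Mb" using Mb closure_subset by blast
  have S: "\<Omega> \<in> lmeasurable" using lmeasurable_open bd op by blast
  define mes where "mes = integral \<Omega> (\<lambda>x. 1::real)"
  have mes0: "mes \<ge> 0" unfolding mes_def
    by (rule integral_nonneg) (auto intro: integrable_on_const[OF S])
  define Lc where "Lc = \<bar>Mb\<bar> * mes + 1"
  have "0 \<le> \<bar>Mb\<bar> * mes" using mes0 by simp
  then have Lc: "Lc > 0" unfolding Lc_def by linarith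
  have H\<rho>: "\<And>i. C1_on \<Omega> (\<lambda>y. grad \<rho> y $ i)" using C1_subset[OF \<rho>2] by blast
  have psi01: "0 \<le> psi t" "psi t \<le> 1" for t using psi_range by auto
  define P1 where "P1 \<epsilon> x = psi (- \<rho> x / \<epsilon>) * dv x" for \<epsilon> x
  define B1 where "B1 \<epsilon> x = dpsi (- \<rho> x / \<epsilon>) / \<epsilon> * (grad \<rho> x \<bullet> H x)" for \<epsilon> x
  define P2 where "P2 \<epsilon> x = psi (- \<rho> x / \<epsilon>) * L0 x" for \<epsilon> x
  define W where "W \<epsilon> x = dpsi (- \<rho> x / \<epsilon>) / \<epsilon> * (grad \<rho> x \<bullet> grad \<rho> x)" for \<epsilon> x
  have psic: "continuous_on \<Omega> (\<lambda>x. psi (- \<rho> x / \<epsilon>))" if "\<epsilon> > 0" for \<epsilon>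
  proof -
    have cr: "continuous_on \<Omega> (\<lambda>x. - \<rho> x / \<epsilon>)"
      by (intro continuous_intros continuous_on_subset[OF \<rho>c]) (use that in auto)
    show ?thesis by (rule continuous_on_compose2[OF psi_cont cr]) auto
  qed
  have P1i: "P1 \<epsilon> integrable_on \<Omega>" if "\<epsilon> > 0" for \<epsilon>
  proof (rule int_bdd[OF op bd, where M=M])
    show "continuous_on \<Omega> (P1 \<epsilon>)" unfolding P1_def by (intro continuous_intros psic dvc that)
    fix x assume x: "x \<in> \<Omega>"
    have "\<bar>P1 \<epsilon> x\<bar> = psi (- \<rho> x / \<epsilon>) * \<bar>dv x\<bar>" using psi01 by (simp add: P1_def abs_mult)
    also have "\<dots> \<le> 1 * \<bar>dv x\<bar>" by (rule mult_right_mono) (use psi01 in auto)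
    finally show "\<bar>P1 \<epsilon> x\<bar> \<le> M" using divb[OF x] by (simp add: dv_def)
  qed
  have P2i: "P2 \<epsilon> integrable_on \<Omega>" if "\<epsilon> > 0" for \<epsilon>
  proof (rule int_bdd[OF op bd, where M=Mb])
    show "continuous_on \<Omega> (P2 \<epsilon>)" unfolding P2_def
      by (intro continuous_intros psic continuous_on_subset[OF L0c] that) auto
    fix x assume x: "x \<in> \<Omega>"
    have "\<bar>P2 \<epsilon> x\<bar> = psi (- \<rho> x / \<epsilon>) * \<bar>L0 x\<bar>" using psi01 by (simp add: P2_def abs_mult)
    also have "\<dots> \<le> 1 * \<bar>L0 x\<bar>" by (rule mult_right_mono) (use psi01 in auto)
    finally show "\<bar>P2 \<epsilon> x\<bar> \<le> Mb" using Mb'[OF x] by simp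
  qed
  have id1: "((\<lambda>x. P1 \<epsilon> x - B1 \<epsilon> x) has_integral 0) \<Omega>" if "\<epsilon> > 0" for \<epsilon>
    using ident[OF \<Omega> bd \<rho> H that] unfolding P1_def B1_def dv_def .
  have id2: "((\<lambda>x. P2 \<epsilon> x - W \<epsilon> x) has_integral 0) \<Omega>" if "\<epsilon> > 0" for \<epsilon>
    using ident[OF \<Omega> bd \<rho> H\<rho> that] unfolding P2_def W_def L0_def .
  have B1i: "B1 \<epsilon> integrable_on \<Omega>" and IB1: "integral \<Omega> (B1 \<epsilon>) = integral \<Omega> (P1 \<epsilon>)" if "\<epsilon> > 0" for \<epsilon>
  proof -
    have "((\<lambda>x. P1 \<epsilon> x - (P1 \<epsilon> x - B1 \<epsilon> x)) has_integral (integral \<Omega> (P1 \<epsilon>) - 0)) \<Omega>"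
      by (rule has_integral_diff[OF integrable_integral[OF P1i[OF that]] id1[OF that]])
    then have "(B1 \<epsilon> has_integral integral \<Omega> (P1 \<epsilon>)) \<Omega>" by simp
    then show "B1 \<epsilon> integrable_on \<Omega>" "integral \<Omega> (B1 \<epsilon>) = integral \<Omega> (P1 \<epsilon>)"
      by (auto simp: integrable_on_def integral_unique)
  qed
  have Wi: "W \<epsilon> integrable_on \<Omega>" and IW: "integral \<Omega> (W \<epsilon>) = integral \<Omega> (P2 \<epsilon>)" if "\<epsilon> > 0" for \<epsilon>
  proof -
    have "((\<lambda>x. P2 \<epsilon> x - (P2 \<epsilon> x - W \<epsilon> x)) has_integral (integral \<Omega> (P2 \<epsilon>) - 0)) \<Omega>"
      by (rule has_integral_diff[OF integrable_integral[OF P2i[OF that]] id2[OF that]])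
    then have "(W \<epsilon> has_integral integral \<Omega> (P2 \<epsilon>)) \<Omega>" by simp
    then show "W \<epsilon> integrable_on \<Omega>" "integral \<Omega> (W \<epsilon>) = integral \<Omega> (P2 \<epsilon>)"
      by (auto simp: integrable_on_def integral_unique)
  qed
  have IWb: "integral \<Omega> (W \<epsilon>) \<le> Lc" if "\<epsilon> > 0" for \<epsilon>
  proof -
    have "integral \<Omega> (P2 \<epsilon>) \<le> integral \<Omega> (\<lambda>x. \<bar>Mb\<bar>)"
    proof (rule integral_le[OF P2i[OF that] integrable_on_const[OF S]])
      fix x assume x: "x \<in> \<Omega>"
      have "\<bar>P2 \<epsilon> x\<bar> = psi (- \<rho> x / \<epsilon>) * \<bar>L0 x\<bar>" using psi01 by (simp add: P2_def abs_mult)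
      also have "\<dots> \<le> 1 * \<bar>L0 x\<bar>" by (rule mult_right_mono) (use psi01 in auto)
      finally show "P2 \<epsilon> x \<le> \<bar>Mb\<bar>" using Mb'[OF x] by linarith
    qed
    also have "\<dots> = \<bar>Mb\<bar> * mes" unfolding mes_def
      using integral_cmul[of \<Omega> "\<bar>Mb\<bar>" "\<lambda>x. 1::real"] by simp
    finally show ?thesis using IW[OF that] by (simp add: Lc_def)
  qed
  define e where "e k = 1 / (real k + 1)" for k
  have e0: "e k > 0" for k by (simp add: e_def)
  have lim1: "(\<lambda>k. integral \<Omega> (B1 (e k))) \<longlonglongrightarrow> 0"
  proof (rule LIMSEQ_I)
    fix r :: real assume r: "r > 0"
    define \<delta> where "\<delta> = r / (2 * Lc)"
    have \<delta>: "\<delta> > 0" using r Lc by (simp add: \<delta>_def)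
    obtain e1 where e1: "e1 > 0"
      and near: "\<And>x. x \<in> \<Omega> \<Longrightarrow> \<rho> x > - e1 \<Longrightarrow> \<bar>Hc x \<bullet> grad \<rho> x\<bar> \<le> \<delta> * (grad \<rho> x \<bullet> grad \<rho> x)"
      using near_boundary[OF op bd \<Omega> \<rho>c g\<rho>c nz Hc bc \<delta>] by blast
    obtain N where N: "inverse (real (Suc N)) < e1 / 2" using reals_Archimedean[of "e1/2"] e1 by auto
    show "\<exists>no. \<forall>n\<ge>no. norm (integral \<Omega> (B1 (e n)) - 0) < r"
    proof (intro exI[of _ N] allI impI)
      fix n assume n: "n \<ge> N"
      have en: "e n < e1 / 2"
      proof -
        have "e n \<le> inverse (real (Suc N))" using n by (simp add: e_def inverse_eq_divide frac_le)
        then show ?thesis using N by linarith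
      qed
      have pt: "norm (B1 (e n) x) \<le> \<delta> * W (e n) x" if x: "x \<in> \<Omega>" for x
      proof (cases "dpsi (- \<rho> x / e n) = 0")
        case True then show ?thesis by (simp add: B1_def W_def)
      next
        case False
        have d2: "2 \<le> - \<rho> x / e n \<Longrightarrow> dpsi (- \<rho> x / e n) = 0" unfolding dpsi_def by simp
        have "- \<rho> x / e n < 2" using False d2 by linarith
        then have "(- \<rho> x / e n) * e n < 2 * e n" using e0[of n] by (rule mult_strict_right_mono)
        then have "- \<rho> x < 2 * e n" using e0[of n] by simp
        then have "\<rho> x > - e1" using en by linarith
        then have b: "\<bar>grad \<rho> x \<bullet> H x\<bar> \<le> \<delta> * (grad \<rho> x \<bullet> grad \<rho> x)"
          using near[OF x] HHc[OF x] by (simp add: inner_commute)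
        have "norm (B1 (e n) x) = dpsi (- \<rho> x / e n) / e n * \<bar>grad \<rho> x \<bullet> H x\<bar>"
          using dpsi_nonneg e0[of n] by (simp add: B1_def abs_mult)
        also have "\<dots> \<le> dpsi (- \<rho> x / e n) / e n * (\<delta> * (grad \<rho> x \<bullet> grad \<rho> x))"
          by (rule mult_left_mono[OF b]) (use dpsi_nonneg e0[of n] in simp)
        also have "\<dots> = \<delta> * W (e n) x" by (simp add: W_def)
        finally show ?thesis .
      qed
      have Wd: "(\<lambda>x. \<delta> * W (e n) x) integrable_on \<Omega>"
        using integrable_on_cmult_left[OF Wi[OF e0[of n]], of \<delta>] by simp
      have "norm (integral \<Omega> (B1 (e n))) \<le> integral \<Omega> (\<lambda>x. \<delta> * W (e n) x)"
        by (rule integral_norm_bound_integral[OF B1i[OF e0[of n]] Wd pt])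
      also have "\<dots> = \<delta> * integral \<Omega> (W (e n))" by simp
      also have "\<dots> \<le> \<delta> * Lc" by (rule mult_left_mono[OF IWb[OF e0]]) (use \<delta> in simp)
      also have "\<dots> < r" using Lc r by (simp add: \<delta>_def)
      finally show "norm (integral \<Omega> (B1 (e n)) - 0) < r" by simp
    qed
  qed
  have lim2: "(\<lambda>k. integral \<Omega> (P1 (e k))) \<longlonglongrightarrow> integral \<Omega> dv"
  proof (rule dominated_convergence(2)[where h="\<lambda>x. M"])
    show "\<And>k. P1 (e k) integrable_on \<Omega>" using P1i[OF e0] .
    show "(\<lambda>x. M) integrable_on \<Omega>" using integrable_on_const[OF S] .
    fix k x assume x: "x \<in> \<Omega>"
    have "\<bar>P1 (e k) x\<bar> = psi (- \<rho> x / e k) * \<bar>dv x\<bar>" using psi01 by (simp add: P1_def abs_mult)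
    also have "\<dots> \<le> 1 * \<bar>dv x\<bar>" by (rule mult_right_mono) (use psi01 in auto)
    finally show "norm (P1 (e k) x) \<le> M" using divb[OF x] by (simp add: dv_def)
  next
    fix x assume x: "x \<in> \<Omega>"
    then have rx: "- \<rho> x / 2 > 0" by (simp add: \<Omega>)
    obtain N where N: "inverse (real (Suc N)) < - \<rho> x / 2" using reals_Archimedean[OF rx] by auto
    have "eventually (\<lambda>k. P1 (e k) x = dv x) sequentially"
      unfolding eventually_sequentially
    proof (intro exI[of _ N] allI impI)
      fix n assume n: "n \<ge> N"
      have "e n \<le> inverse (real (Suc N))" using n by (simp add: e_def inverse_eq_divide frac_le)
      then have "e n < - \<rho> x / 2" using N by linarith
      then have "2 * e n \<le> - \<rho> x" by linarith
      then have "2 \<le> - \<rho> x / e n" using e0[of n] by (simp only: le_divide_eq) simp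
      then show "P1 (e n) x = dv x" by (simp add: P1_def psi_one)
    qed
    then show "(\<lambda>k. P1 (e k) x) \<longlonglongrightarrow> dv x" by (rule tendsto_eventually)
  qed
  have "(\<lambda>k. integral \<Omega> (P1 (e k))) = (\<lambda>k. integral \<Omega> (B1 (e k)))"
    using IB1[OF e0] by simp
  with lim1 lim2 have "integral \<Omega> dv = 0" using LIMSEQ_unique by metis
  moreover have "dv integrable_on \<Omega>"
    by (rule int_bdd[OF op bd dvc]) (use divb in \<open>simp add: dv_def\<close>)
  ultimately show ?thesis unfolding dv_def[symmetric] using integrable_integral by fastforce
qed




lemma zero_of_int0:
  fixes f :: "real^'n \<Rightarrow> real"
  assumes op: "open S" and c: "continuous_on S f" and nn: "\<And>x. x \<in> S \<Longrightarrow> f x \<ge> 0"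
    and i: "(f has_integral 0) S" and x: "x \<in> S"
  shows "f x = 0"
proof -
  obtain a b where ab: "cbox a b \<subseteq> S" "x \<in> box a b" "\<forall>i\<in>Basis. a \<bullet> i < b \<bullet> i"
    using open_contains_cbox[OF op x] by blast
  have cb: "continuous_on (cbox a b) f" using c ab(1) continuous_on_subset by blast
  have fi: "f integrable_on cbox a b" using integrable_continuous[OF cb] .
  have "integral (cbox a b) f \<le> 0"
    using has_integral_subset_le[OF ab(1) integrable_integral[OF fi] i] nn by blast
  moreover have "integral (cbox a b) f \<ge> 0"
    by (rule integral_nonneg[OF fi]) (use nn ab(1) in auto)
  ultimately have h0: "(f has_integral 0) (cbox a b)"
    using integrable_integral[OF fi] by simp
  have "box a b \<noteq> {}" using ab(2) by blast
  moreover have "x \<in> cbox a b" using ab(2) box_subset_cbox by blast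
  moreover have "\<And>y. y \<in> box a b \<Longrightarrow> 0 \<le> f y" using nn ab(1) box_subset_cbox by blast
  ultimately show ?thesis using has_integral_0_cbox_imp_0[OF cb _ h0] by blast
qed

lemma normal_deriv_zero:
  fixes \<rho> w :: "real^'n \<Rightarrow> real" and G :: "real^'n"
  assumes \<Omega>: "\<Omega> = {x. \<rho> x < 0}" and \<rho>: "C1_on UNIV \<rho>"
    and nz: "grad \<rho> x \<noteq> 0" and \<rho>0: "\<rho> x = 0"
    and wG: "(w has_derivative (\<lambda>h. G \<bullet> h)) (at x within closure \<Omega>)"
    and bcw: "\<exists>D. (w has_derivative D) (at x within closure \<Omega>) \<and> D (normal \<rho> x) = 0"
  shows "G \<bullet> grad \<rho> x = 0"
proof -
  obtain D where D: "(w has_derivative D) (at x within closure \<Omega>)" "D (normal \<rho> x) = 0"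
    using bcw by blast
  have lD: "linear D" using has_derivative_linear[OF D(1)] .
  define v where "v = - grad \<rho> x"
  have nv: "grad \<rho> x = norm (grad \<rho> x) *\<^sub>R normal \<rho> x"
    using nz by (simp add: normal_def)
  have Dv: "D v = 0" unfolding v_def
    by (subst nv) (simp add: linear_cmul[OF lD] linear_neg[OF lD] D(2))
  \<comment> \<open>points x + t v lie in \<Omega> for small t > 0\<close>
  have phi: "((\<lambda>t. \<rho> (x + t *\<^sub>R v)) has_real_derivative (grad \<rho> x \<bullet> v)) (at 0 within {0<..})"
  proof -
    have "((\<lambda>t. x + t *\<^sub>R v) has_derivative (\<lambda>h. h *\<^sub>R v)) (at 0 within {0<..})"
      by (auto intro!: derivative_eq_intros)
    moreover have "(\<rho> has_derivative (\<lambda>h. grad \<rho> x \<bullet> h)) (at (x + 0 *\<^sub>R v))"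
      using C1_has[OF \<rho>, of x] by simp
    ultimately have "((\<lambda>t. \<rho> (x + t *\<^sub>R v)) has_derivative (\<lambda>h. grad \<rho> x \<bullet> (h *\<^sub>R v))) (at 0 within {0<..})"
      by (rule has_derivative_compose)
    moreover have "(\<lambda>h. grad \<rho> x \<bullet> (h *\<^sub>R v)) = (*) (grad \<rho> x \<bullet> v)" by (auto simp: mult.commute)
    ultimately show ?thesis by (simp add: has_field_derivative_def)
  qed
  have neg: "grad \<rho> x \<bullet> v < 0" using nz by (simp add: v_def)
  obtain d where d: "d > 0" "\<And>h. h > 0 \<Longrightarrow> h < d \<Longrightarrow> \<rho> (x + h *\<^sub>R v) < 0"
    using has_real_derivative_neg_dec_right[OF phi neg] \<rho>0 by auto
  define T where "T = {0<..<d}"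
  have inT: "x + t *\<^sub>R v \<in> closure \<Omega>" if "t \<in> T" for t
  proof -
    have "x + t *\<^sub>R v \<in> \<Omega>" using d(2)[of t] that by (auto simp: T_def \<Omega>)
    then show ?thesis using closure_subset by blast
  qed
  have g: "((\<lambda>t. x + t *\<^sub>R v) has_derivative (\<lambda>h. h *\<^sub>R v)) (at 0 within T)"
    by (auto intro!: derivative_eq_intros)
  have sub: "(\<lambda>t. x + t *\<^sub>R v) ` T \<subseteq> closure \<Omega>" using inT by auto
  have d1: "((\<lambda>t. w (x + t *\<^sub>R v)) has_derivative (\<lambda>h. D (h *\<^sub>R v))) (at 0 within T)"
  proof -
    have "(w has_derivative D) (at (x + 0 *\<^sub>R v) within (\<lambda>t. x + t *\<^sub>R v) ` T)"
      using has_derivative_subset[OF D(1) sub] by simp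
    from has_derivative_in_compose[OF g this] show ?thesis .
  qed
  have d2: "((\<lambda>t. w (x + t *\<^sub>R v)) has_derivative (\<lambda>h. G \<bullet> (h *\<^sub>R v))) (at 0 within T)"
  proof -
    have "(w has_derivative (\<lambda>h. G \<bullet> h)) (at (x + 0 *\<^sub>R v) within (\<lambda>t. x + t *\<^sub>R v) ` T)"
      using has_derivative_subset[OF wG sub] by simp
    from has_derivative_in_compose[OF g this] show ?thesis .
  qed
  have e1: "(\<lambda>h. D (h *\<^sub>R v)) = (\<lambda>h. h *\<^sub>R D v)" using linear_cmul[OF lD] by auto
  have e2: "(\<lambda>h. G \<bullet> (h *\<^sub>R v)) = (\<lambda>h. h *\<^sub>R (G \<bullet> v))" by auto
  have nb: "at (0::real) within T \<noteq> bot"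
    using trivial_limit_within islimpt_greaterThanLessThan1[OF d(1)] by (auto simp: T_def)
  have "D v = G \<bullet> v"
    by (rule vector_derivative_unique_within[OF nb])
       (use d1 d2 e1 e2 in \<open>auto simp: has_vector_derivative_def\<close>)
  then show ?thesis using Dv by (simp add: v_def)
qed




lemma div_grad: "divergence F x = (\<Sum>i\<in>UNIV. grad (\<lambda>y. F y $ i) x $ i)"
  by (simp add: divergence_def grad_def)

lemma alg_t2:
  fixes a w A g b :: real
  assumes "w \<noteq> 0"
  shows "(a / w) * A + g * ((1 / w ^ 2) * (w * b - a * g)) = (1 / w) * (a * A + g * b) - a * (g * g) / w^2"
  using assms by (simp add: field_simps power2_eq_square)

lemma species:
  fixes \<rho> w a f :: "real^'n \<Rightarrow> real" and G :: "real^'n \<Rightarrow> real^'n"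
  assumes \<Omega>: "\<Omega> = {x. \<rho> x < 0}" and bd: "bounded \<Omega>"
    and \<rho>: "C1_on UNIV \<rho>" and \<rho>2: "\<And>i. C1_on UNIV (\<lambda>y. grad \<rho> y $ i)"
    and nz: "\<And>x. \<rho> x = 0 \<Longrightarrow> grad \<rho> x \<noteq> 0"
    and w: "C2_on \<Omega> w" and wc: "continuous_on (closure \<Omega>) w"
    and wp: "\<And>x. x \<in> closure \<Omega> \<Longrightarrow> w x > 0"
    and a: "C1_on \<Omega> a" and ac: "continuous_on (closure \<Omega>) a"
    and Gc: "continuous_on (closure \<Omega>) G"
    and wG: "\<And>x. x \<in> closure \<Omega> \<Longrightarrow> (w has_derivative (\<lambda>h. G x \<bullet> h)) (at x within closure \<Omega>)"
    and bcw: "\<And>x. x \<in> frontier \<Omega> \<Longrightarrow> \<exists>D. (w has_derivative D) (at x within closure \<Omega>) \<and> D (normal \<rho> x) = 0"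
    and fc: "continuous_on (closure \<Omega>) f"
    and eq: "\<And>x. x \<in> \<Omega> \<Longrightarrow> divergence (\<lambda>y. a y *\<^sub>R grad w y) x = f x"
  shows "\<And>x. x \<in> \<Omega> \<Longrightarrow> grad w x = G x" and "(f has_integral 0) \<Omega>"
    and "((\<lambda>x. f x / w x - a x * (G x \<bullet> G x) / (w x)^2) has_integral 0) \<Omega>"
proof -
  have \<rho>c: "continuous_on UNIV \<rho>" using C1_cont[OF \<rho>] .
  have op: "open \<Omega>" unfolding \<Omega> using \<rho>c by (simp add: open_Collect_less)
  show gG: "grad w x = G x" if x: "x \<in> \<Omega>" for x
  proof -
    have "(w has_derivative (\<lambda>h. G x \<bullet> h)) (at x within \<Omega>)"
      using has_derivative_subset[OF wG closure_subset] x closure_subset by blast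
    then have "(w has_derivative (\<lambda>h. G x \<bullet> h)) (at x)"
      using at_within_open[OF x op] by simp
    then show ?thesis by (rule grad_unique)
  qed
  have frc: "x \<in> closure \<Omega>" and fr0: "\<rho> x = 0" if fr: "x \<in> frontier \<Omega>" for x
  proof -
    show xc: "x \<in> closure \<Omega>" using fr by (simp add: frontier_def)
    have xn: "x \<notin> \<Omega>" using fr op by (simp add: frontier_def interior_open)
    have "closure \<Omega> \<subseteq> {x. \<rho> x \<le> 0}"
      by (rule closure_minimal) (auto simp: \<Omega> closed_Collect_le[OF \<rho>c continuous_on_const])
    then show "\<rho> x = 0" using xc xn by (auto simp: \<Omega>)
  qed
  have bcG: "G x \<bullet> grad \<rho> x = 0" if fr: "x \<in> frontier \<Omega>" for x
    using normal_deriv_zero[OF \<Omega> \<rho> nz[OF fr0[OF fr]] fr0[OF fr] wG[OF frc[OF fr]] bcw[OF fr]] .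
  obtain Mf where Mf: "\<And>x. x \<in> closure \<Omega> \<Longrightarrow> \<bar>f x\<bar> \<le> Mf"
    using bdd_closure[OF bd fc] by blast
  have w1: "C1_on \<Omega> w" using w by (simp add: C2_on_def)
  have wg1: "C1_on \<Omega> (\<lambda>y. grad w y $ i)" for i using w by (simp add: C2_on_def)
  have wp': "\<And>x. x \<in> \<Omega> \<Longrightarrow> w x \<noteq> 0" using wp closure_subset by force
  have I1: "((\<lambda>x. \<Sum>i\<in>UNIV. grad (\<lambda>y. (a y *\<^sub>R grad w y) $ i) x $ i) has_integral 0) \<Omega>"
  proof (rule divthm[OF \<Omega> bd \<rho> \<rho>2 nz, where Hc="\<lambda>y. a y *\<^sub>R G y" and M=Mf])
    show "C1_on \<Omega> (\<lambda>y. (a y *\<^sub>R grad w y) $ i)" for i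
      using C1_mult[OF a wg1[of i]] by simp
    show "continuous_on (closure \<Omega>) (\<lambda>y. a y *\<^sub>R G y)" by (intro continuous_intros ac Gc)
    show "a x *\<^sub>R grad w x = a x *\<^sub>R G x" if "x \<in> \<Omega>" for x using gG[OF that] by simp
    show "(a x *\<^sub>R G x) \<bullet> grad \<rho> x = 0" if "x \<in> frontier \<Omega>" for x using bcG[OF that] by simp
    show "\<bar>\<Sum>i\<in>UNIV. grad (\<lambda>y. (a y *\<^sub>R grad w y) $ i) x $ i\<bar> \<le> Mf" if "x \<in> \<Omega>" for x
    proof -
      have "(\<Sum>i\<in>UNIV. grad (\<lambda>y. (a y *\<^sub>R grad w y) $ i) x $ i) = f x"
        using eq[OF that] unfolding div_grad .
      then show ?thesis using Mf[of x] that closure_subset by auto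
    qed
  qed
  have e1: "(\<Sum>i\<in>UNIV. grad (\<lambda>y. (a y *\<^sub>R grad w y) $ i) x $ i) = f x" if "x \<in> \<Omega>" for x
    using eq[OF that] unfolding div_grad .
  show "(f has_integral 0) \<Omega>"
    by (rule has_integral_eq[OF _ I1]) (rule e1)
  define R where "R x = f x / w x - a x * (G x \<bullet> G x) / (w x)^2" for x
  have Rc: "continuous_on (closure \<Omega>) R" unfolding R_def
    by (intro continuous_intros fc wc ac Gc) (use wp in force)+
  obtain MR where MR: "\<And>x. x \<in> closure \<Omega> \<Longrightarrow> \<bar>R x\<bar> \<le> MR"
    using bdd_closure[OF bd Rc] by blast
  have divR: "(\<Sum>i\<in>UNIV. grad (\<lambda>y. (a y / w y) * grad w y $ i) x $ i) = R x" if x: "x \<in> \<Omega>" for x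
  proof -
    have ad: "a differentiable (at x)" using C1_diff[OF a x] .
    have wd: "w differentiable (at x)" using C1_diff[OF w1 x] .
    have gd: "(\<lambda>y. grad w y $ i) differentiable (at x)" for i using C1_diff[OF wg1 x] .
    have qd: "(\<lambda>y. a y / w y) differentiable (at x)" using ad wd wp'[OF x] by (simp add: differentiable_divide)
    have wx: "w x \<noteq> 0" using wp'[OF x] .
    have t1: "grad (\<lambda>y. a y * grad w y $ i) x $ i
        = a x * grad (\<lambda>y. grad w y $ i) x $ i + grad w x $ i * grad a x $ i" for i
      using grad_mult[OF ad gd[of i]] by simp
    have t2: "grad (\<lambda>y. (a y / w y) * grad w y $ i) x $ i
        = (1 / w x) * (a x * grad (\<lambda>y. grad w y $ i) x $ i + grad w x $ i * grad a x $ i)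
          - a x * (grad w x $ i * grad w x $ i) / (w x)^2" for i
    proof -
      have "grad (\<lambda>y. (a y / w y) * grad w y $ i) x $ i
          = (a x / w x) * grad (\<lambda>y. grad w y $ i) x $ i
            + grad w x $ i * ((1 / w x ^ 2) * (w x * grad a x $ i - a x * grad w x $ i))"
        using grad_mult[OF qd gd[of i]] grad_divide[OF ad wd wx] by simp
      also have "\<dots> = (1 / w x) * (a x * grad (\<lambda>y. grad w y $ i) x $ i + grad w x $ i * grad a x $ i)
          - a x * (grad w x $ i * grad w x $ i) / (w x)^2"
        by (rule alg_t2[OF wx])
      finally show ?thesis .
    qed
    have "(\<Sum>i\<in>UNIV. grad (\<lambda>y. (a y / w y) * grad w y $ i) x $ i)
        = (1 / w x) * (\<Sum>i\<in>UNIV. a x * grad (\<lambda>y. grad w y $ i) x $ i + grad w x $ i * grad a x $ i)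
          - a x * (\<Sum>i\<in>UNIV. grad w x $ i * grad w x $ i) / (w x)^2"
      unfolding t2 by (simp add: sum_subtractf sum_distrib_left sum_divide_distrib)
    also have "(\<Sum>i\<in>UNIV. a x * grad (\<lambda>y. grad w y $ i) x $ i + grad w x $ i * grad a x $ i) = f x"
      using eq[OF x] unfolding div_grad t1[symmetric] by simp
    also have "(\<Sum>i\<in>UNIV. grad w x $ i * grad w x $ i) = G x \<bullet> G x"
      using gG[OF x] by (simp add: inner_vec_def)
    finally show ?thesis by (simp add: R_def)
  qed
  have I2: "((\<lambda>x. \<Sum>i\<in>UNIV. grad (\<lambda>y. ((a y / w y) *\<^sub>R grad w y) $ i) x $ i) has_integral 0) \<Omega>"
  proof (rule divthm[OF \<Omega> bd \<rho> \<rho>2 nz, where Hc="\<lambda>y. (a y / w y) *\<^sub>R G y" and M=MR])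
    show "C1_on \<Omega> (\<lambda>y. ((a y / w y) *\<^sub>R grad w y) $ i)" for i
      using C1_mult[OF C1_divide[OF a w1 wp'] wg1[of i]] by simp
    show "continuous_on (closure \<Omega>) (\<lambda>y. (a y / w y) *\<^sub>R G y)"
      by (intro continuous_intros ac Gc wc) (use wp in force)
    show "(a x / w x) *\<^sub>R grad w x = (a x / w x) *\<^sub>R G x" if "x \<in> \<Omega>" for x using gG[OF that] by simp
    show "((a x / w x) *\<^sub>R G x) \<bullet> grad \<rho> x = 0" if "x \<in> frontier \<Omega>" for x using bcG[OF that] by simp
    show "\<bar>\<Sum>i\<in>UNIV. grad (\<lambda>y. ((a y / w y) *\<^sub>R grad w y) $ i) x $ i\<bar> \<le> MR" if "x \<in> \<Omega>" for x
      using divR[OF that] MR[of x] that closure_subset by auto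
  qed
  have e2: "(\<Sum>i\<in>UNIV. grad (\<lambda>y. ((a y / w y) *\<^sub>R grad w y) $ i) x $ i) = R x" if "x \<in> \<Omega>" for x
    using divR[OF that] by simp
  have "(R has_integral 0) \<Omega>"
    by (rule has_integral_eq[OF _ I2]) (rule e2)
  then show "((\<lambda>x. f x / w x - a x * (G x \<bullet> G x) / (w x)^2) has_integral 0) \<Omega>"
    unfolding R_def .
qed




lemma const_of_grad0:
  fixes w :: "real^'n \<Rightarrow> real"
  assumes op: "open \<Omega>" and cn: "connected \<Omega>" and w: "C1_on \<Omega> w"
    and g0: "\<And>x. x \<in> \<Omega> \<Longrightarrow> grad w x = 0" and x0: "x0 \<in> \<Omega>" and x: "x \<in> \<Omega>"
  shows "w x = w x0"
proof (rule has_derivative_zero_unique_connected[OF op cn _ x x0])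
  fix y assume y: "y \<in> \<Omega>"
  show "(w has_derivative (\<lambda>h. 0)) (at y)" using C1_has[OF w y] g0[OF y] by simp
qed

lemma alg_main:
  fixes c r U V Z Kk F1 F2 F1W q :: real
  assumes "c \<noteq> 0" "F1 = -(r*U*(1-Z))" "F2 = -(r*V*(1-Z))" "U + V = Z*Kk" "F1W = -(r*(c*Kk)*(1-Z))"
  shows "r*Kk*(1-Z)^2 + q/c = (-(1/c)) * (F1W - q) + F1 + F2"
proof -
  have "F1 + F2 = -(r*(U+V)*(1-Z))" using assms(2,3) by (simp add: algebra_simps)
  also have "\<dots> = -(r*(Z*Kk)*(1-Z))" using assms(4) by simp
  finally have s: "F1 + F2 = -(r*(Z*Kk)*(1-Z))" .
  have "(-(1/c)) * (F1W - q) = (q + c*(r*Kk*(1-Z))) / c"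
    by (simp add: assms(5) divide_inverse algebra_simps)
  also have "\<dots> = q/c + r*Kk*(1-Z)" using assms(1) by (simp add: add_divide_distrib)
  finally have "(-(1/c)) * (F1W - q) = r*Kk*(1-Z) + q/c" by simp
  moreover have "r*Kk*(1-Z)^2 = r*Kk*(1-Z) - r*(Z*Kk)*(1-Z)" by (simp add: power2_eq_square algebra_simps)
  ultimately show ?thesis using s by linarith
qed

theorem lemma8:
  fixes \<Omega> :: "(real^'n) set" and \<beta> :: real and \<rho> :: "real^'n \<Rightarrow> real"
    and r a1 a2 P Q K :: "real^'n \<Rightarrow> real"
  assumes "open \<Omega>" and "bounded \<Omega>" and "connected \<Omega>" and "\<Omega> \<noteq> {}"
    and "\<beta> > 0" and "C2beta_defining_fun \<beta> \<Omega> \<rho>"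
    and "continuous_on (closure \<Omega>) r" and "continuous_on (closure \<Omega>) a1"
    and "continuous_on (closure \<Omega>) a2" and "continuous_on (closure \<Omega>) P"
    and "continuous_on (closure \<Omega>) Q" and "continuous_on (closure \<Omega>) K"
    and "\<forall>x\<in>closure \<Omega>. r x > 0 \<and> a1 x > 0 \<and> a2 x > 0 \<and> P x > 0 \<and> Q x > 0 \<and> K x > 0"
    and "C2_on \<Omega> a1" and "C2_on \<Omega> a2" and "C2_on \<Omega> P" and "C2_on \<Omega> Q"
    and "\<exists>c. \<forall>x\<in>\<Omega>. P x / K x = c"
    and "\<not> (\<exists>c1 c2. (c1 \<noteq> 0 \<or> c2 \<noteq> 0) \<and> (\<forall>x\<in>\<Omega>. c1 * Q x + c2 * K x = 0))"
  shows "\<not> (\<exists>u v. coexistence_equilibrium \<Omega> \<rho> r a1 a2 P Q K u v)"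
proof
  note op = assms(1) and bd = assms(2) and cn = assms(3) and ne = assms(4)
  note rc = assms(7) and a1c = assms(8) and a2c = assms(9) and Pc = assms(10) and Qc = assms(11)
    and Kc = assms(12) and pos = assms(13) and a1C = assms(14) and a2C = assms(15)
    and PC = assms(16) and QC = assms(17) and indep = assms(19)
  assume "\<exists>u v. coexistence_equilibrium \<Omega> \<rho> r a1 a2 P Q K u v"
  then obtain u v where ce: "coexistence_equilibrium \<Omega> \<rho> r a1 a2 P Q K u v" by blast
  note ce' = ce[unfolded coexistence_equilibrium_def]
  have uC: "C2_on \<Omega> u" and vC: "C2_on \<Omega> v" and uc: "continuous_on (closure \<Omega>) u"
    and vc: "continuous_on (closure \<Omega>) v" and uvp: "\<forall>x\<in>closure \<Omega>. u x > 0 \<and> v x > 0"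
    and C1u: "C1_closure \<Omega> (\<lambda>x. u x / P x)" and C1v: "C1_closure \<Omega> (\<lambda>x. v x / Q x)"
    and equ: "\<forall>x\<in>\<Omega>. divergence (\<lambda>y. a1 y *\<^sub>R grad (\<lambda>z. u z / P z) y) x
                + r x * u x * (1 - (u x + v x) / K x) = 0"
    and eqv: "\<forall>x\<in>\<Omega>. divergence (\<lambda>y. a2 y *\<^sub>R grad (\<lambda>z. v z / Q z) y) x
                + r x * v x * (1 - (u x + v x) / K x) = 0"
    and bu: "\<forall>x\<in>frontier \<Omega>. \<exists>D. ((\<lambda>z. u z / P z) has_derivative D) (at x within closure \<Omega>)
                          \<and> D (normal \<rho> x) = 0"
    and bv: "\<forall>x\<in>frontier \<Omega>. \<exists>D. ((\<lambda>z. v z / Q z) has_derivative D) (at x within closure \<Omega>)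
                          \<and> D (normal \<rho> x) = 0"
    using ce' by auto
  have \<rho>C: "C2_on UNIV \<rho>" and \<Omega>: "\<Omega> = {x. \<rho> x < 0}" and nz: "\<And>x. \<rho> x = 0 \<Longrightarrow> grad \<rho> x \<noteq> 0"
    using assms(6) unfolding C2beta_defining_fun_def by auto
  have \<rho>1: "C1_on UNIV \<rho>" and \<rho>2: "\<And>i. C1_on UNIV (\<lambda>y. grad \<rho> y $ i)"
    using \<rho>C by (auto simp: C2_on_def)
  have cl: "x \<in> \<Omega> \<Longrightarrow> x \<in> closure \<Omega>" for x using closure_subset by blast
  obtain x0 where x0: "x0 \<in> \<Omega>" using ne by blast
  obtain c where c: "\<And>x. x \<in> \<Omega> \<Longrightarrow> P x / K x = c" using assms(18) by blast
  have cpos: "c > 0" using c[OF x0] pos cl[OF x0] by (metis divide_pos_pos)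
  have PcK: "P x = c * K x" if "x \<in> \<Omega>" for x
    using c[OF that] pos cl[OF that] by (auto simp: field_simps)
  have Pp: "P x > 0" and Qp: "Q x > 0" and Kp: "K x > 0" and rp: "r x > 0"
    and a1p: "a1 x > 0" and a2p: "a2 x > 0" and up: "u x > 0" and vp: "v x > 0"
    if "x \<in> closure \<Omega>" for x using pos uvp that by auto
  obtain G1 where G1c: "continuous_on (closure \<Omega>) G1"
    and G1d: "\<And>x. x \<in> closure \<Omega> \<Longrightarrow> ((\<lambda>x. u x / P x) has_derivative (\<lambda>h. G1 x \<bullet> h)) (at x within closure \<Omega>)"
    using C1u unfolding C1_closure_def by blast
  obtain G2 where G2c: "continuous_on (closure \<Omega>) G2"
    and G2d: "\<And>x. x \<in> closure \<Omega> \<Longrightarrow> ((\<lambda>x. v x / Q x) has_derivative (\<lambda>h. G2 x \<bullet> h)) (at x within closure \<Omega>)"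
    using C1v unfolding C1_closure_def by blast
  define z where "z x = (u x + v x) / K x" for x
  define f1 where "f1 x = - (r x * u x * (1 - z x))" for x
  define f2 where "f2 x = - (r x * v x * (1 - z x))" for x
  have zc: "continuous_on (closure \<Omega>) z" unfolding z_def
    by (intro continuous_intros uc vc Kc) (use Kp in force)
  have f1c: "continuous_on (closure \<Omega>) f1" unfolding f1_def
    by (intro continuous_intros uc rc zc)
  have f2c: "continuous_on (closure \<Omega>) f2" unfolding f2_def
    by (intro continuous_intros vc rc zc)
  have eq1: "divergence (\<lambda>y. a1 y *\<^sub>R grad (\<lambda>z. u z / P z) y) x = f1 x" if "x \<in> \<Omega>" for x
  proof -
    have "divergence (\<lambda>y. a1 y *\<^sub>R grad (\<lambda>z. u z / P z) y) x + r x * u x * (1 - (u x + v x) / K x) = 0"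
      using equ that by blast
    then show ?thesis unfolding f1_def z_def by linarith
  qed
  have eq2: "divergence (\<lambda>y. a2 y *\<^sub>R grad (\<lambda>z. v z / Q z) y) x = f2 x" if "x \<in> \<Omega>" for x
  proof -
    have "divergence (\<lambda>y. a2 y *\<^sub>R grad (\<lambda>z. v z / Q z) y) x + r x * v x * (1 - (u x + v x) / K x) = 0"
      using eqv that by blast
    then show ?thesis unfolding f2_def z_def by linarith
  qed
  have w1C: "C2_on \<Omega> (\<lambda>x. u x / P x)"
    by (rule C2_divide[OF op uC PC]) (use Pp cl in force)
  have w2C: "C2_on \<Omega> (\<lambda>x. v x / Q x)"
    by (rule C2_divide[OF op vC QC]) (use Qp cl in force)
  have w1c: "continuous_on (closure \<Omega>) (\<lambda>x. u x / P x)"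
    by (intro continuous_intros uc Pc) (use Pp in force)
  have w2c: "continuous_on (closure \<Omega>) (\<lambda>x. v x / Q x)"
    by (intro continuous_intros vc Qc) (use Qp in force)
  have w1p: "u x / P x > 0" if "x \<in> closure \<Omega>" for x using up[OF that] Pp[OF that] by simp
  have w2p: "v x / Q x > 0" if "x \<in> closure \<Omega>" for x using vp[OF that] Qp[OF that] by simp
  note S1 = species[OF \<Omega> bd \<rho>1 \<rho>2 nz w1C w1c w1p C2_C1[OF a1C] a1c G1c G1d bu[rule_format] f1c eq1]
  note S2 = species[OF \<Omega> bd \<rho>1 \<rho>2 nz w2C w2c w2p C2_C1[OF a2C] a2c G2c G2d bv[rule_format] f2c eq2]
  have gG1: "grad (\<lambda>z. u z / P z) x = G1 x" if "x \<in> \<Omega>" for x using S1(1) that by blast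
  have gG2: "grad (\<lambda>z. v z / Q z) x = G2 x" if "x \<in> \<Omega>" for x using S2(1) that by blast
  define q1 where "q1 x = a1 x * (G1 x \<bullet> G1 x) / (u x / P x)^2" for x
  define q2 where "q2 x = a2 x * (G2 x \<bullet> G2 x) / (v x / Q x)^2" for x
  define T where "T x = r x * K x * (1 - z x)^2" for x
  have q1c: "continuous_on \<Omega> q1"
    by (rule continuous_on_subset[OF _ closure_subset], unfold q1_def)
       (intro continuous_intros a1c G1c w1c, use w1p in force)
  have q2c: "continuous_on \<Omega> q2"
    by (rule continuous_on_subset[OF _ closure_subset], unfold q2_def)
       (intro continuous_intros a2c G2c w2c, use w2p in force)
  have Tc: "continuous_on \<Omega> T"
    by (rule continuous_on_subset[OF _ closure_subset], unfold T_def)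
       (intro continuous_intros rc Kc zc)
  have q1n: "q1 x \<ge> 0" if "x \<in> \<Omega>" for x using a1p[OF cl[OF that]] by (simp add: q1_def)
  have q2n: "q2 x \<ge> 0" if "x \<in> \<Omega>" for x using a2p[OF cl[OF that]] by (simp add: q2_def)
  have Tn: "T x \<ge> 0" if "x \<in> \<Omega>" for x using rp[OF cl[OF that]] Kp[OF cl[OF that]] by (simp add: T_def)
  have iS: "((\<lambda>x. T x + q1 x / c) has_integral 0) \<Omega>"
  proof -
    have "((\<lambda>x. (-(1/c)) *\<^sub>R (f1 x / (u x / P x) - q1 x) + f1 x + f2 x) has_integral ((-(1/c)) *\<^sub>R 0 + 0 + 0)) \<Omega>"
      by (intro has_integral_add has_integral_cmul S1(2) S2(2)) (use S1(3) in \<open>simp add: q1_def\<close>)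
    then have h: "((\<lambda>x. (-(1/c)) * (f1 x / (u x / P x) - q1 x) + f1 x + f2 x) has_integral 0) \<Omega>"
      by simp
    show ?thesis
    proof (rule has_integral_eq[OF _ h])
      fix x assume x: "x \<in> \<Omega>"
      have ux: "u x \<noteq> 0" "P x \<noteq> 0" using up[OF cl[OF x]] Pp[OF cl[OF x]] by auto
      have "f1 x / (u x / P x) = -(r x * P x * (1 - z x))"
        using ux by (simp add: f1_def field_simps)
      then have fw: "f1 x / (u x / P x) = -(r x * (c * K x) * (1 - z x))" using PcK[OF x] by simp
      have uv: "u x + v x = z x * K x" using Kp[OF cl[OF x]] by (simp add: z_def)
      show "(-(1/c)) * (f1 x / (u x / P x) - q1 x) + f1 x + f2 x = T x + q1 x / c"
        unfolding T_def using alg_main[OF _ f1_def f2_def uv fw, of "q1 x"] cpos by simp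
    qed
  qed
  have S0: "T x + q1 x / c = 0" if "x \<in> \<Omega>" for x
  proof (rule zero_of_int0[OF op _ _ iS that])
    show "continuous_on \<Omega> (\<lambda>x. T x + q1 x / c)" by (intro continuous_intros Tc q1c) (use cpos in simp)
    fix y assume "y \<in> \<Omega>"
    then show "0 \<le> T y + q1 y / c" using Tn q1n cpos by simp
  qed
  have z1: "z x = 1" and q10: "q1 x = 0" if x: "x \<in> \<Omega>" for x
  proof -
    have "q1 x / c \<ge> 0" using q1n[OF x] cpos by simp
    then have T0: "T x = 0" and "q1 x / c = 0" using S0[OF x] Tn[OF x] by linarith+
    then show "q1 x = 0" using cpos by simp
    have "(1 - z x)^2 = 0" using T0 rp[OF cl[OF x]] Kp[OF cl[OF x]] by (simp add: T_def)
    then show "z x = 1" by simp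
  qed
  have gw1: "grad (\<lambda>x. u x / P x) x = 0" if x: "x \<in> \<Omega>" for x
  proof -
    have "a1 x * (G1 x \<bullet> G1 x) / (u x / P x)^2 = 0" using q10[OF x] by (simp add: q1_def)
    then have "G1 x \<bullet> G1 x = 0" using a1p[OF cl[OF x]] up[OF cl[OF x]] Pp[OF cl[OF x]] by simp
    then show ?thesis using gG1[OF x] by simp
  qed
  have iq2: "(q2 has_integral 0) \<Omega>"
  proof -
    have h0: "((\<lambda>x. f2 x / (v x / Q x) - q2 x) has_integral 0) \<Omega>" using S2(3) unfolding q2_def .
    have h: "((\<lambda>x. - (f2 x / (v x / Q x) - q2 x)) has_integral 0) \<Omega>"
      using has_integral_neg[OF h0] by simp
    show ?thesis
    proof (rule has_integral_eq[OF _ h])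
      fix x assume x: "x \<in> \<Omega>"
      then show "- (f2 x / (v x / Q x) - q2 x) = q2 x" by (simp add: f2_def z1)
    qed
  qed
  have gw2: "grad (\<lambda>x. v x / Q x) x = 0" if x: "x \<in> \<Omega>" for x
  proof -
    have "q2 x = 0" by (rule zero_of_int0[OF op q2c q2n iq2 x])
    then have "a2 x * (G2 x \<bullet> G2 x) / (v x / Q x)^2 = 0" by (simp add: q2_def)
    then have "G2 x \<bullet> G2 x = 0" using a2p[OF cl[OF x]] vp[OF cl[OF x]] Qp[OF cl[OF x]] by simp
    then show ?thesis using gG2[OF x] by simp
  qed
  define k1 where "k1 = u x0 / P x0"
  define k2 where "k2 = v x0 / Q x0"
  have k2p: "k2 > 0" using w2p[OF cl[OF x0]] by (simp add: k2_def)
  have "k2 * Q x + (k1 * c - 1) * K x = 0" if x: "x \<in> \<Omega>" for x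
  proof -
    have "u x / P x = k1" unfolding k1_def
      by (rule const_of_grad0[OF op cn C2_C1[OF w1C] gw1 x0 x])
    moreover have "u x = (u x / P x) * P x" using Pp[OF cl[OF x]] by simp
    ultimately have ux: "u x = k1 * (c * K x)" using PcK[OF x] by simp
    have "v x / Q x = k2" unfolding k2_def
      by (rule const_of_grad0[OF op cn C2_C1[OF w2C] gw2 x0 x])
    moreover have "v x = (v x / Q x) * Q x" using Qp[OF cl[OF x]] by simp
    ultimately have vx: "v x = k2 * Q x" by simp
    have uvK: "u x + v x = K x" using z1[OF x] Kp[OF cl[OF x]] unfolding z_def by (simp add: divide_eq_1_iff)
    have "k2 * Q x + (k1 * c - 1) * K x = (k1 * (c * K x) + k2 * Q x) - K x" by (simp add: algebra_simps)
    then show ?thesis using ux vx uvK by simp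
  qed
  then have "\<exists>c1 c2. (c1 \<noteq> 0 \<or> c2 \<noteq> 0) \<and> (\<forall>x\<in>\<Omega>. c1 * Q x + c2 * K x = 0)"
    using k2p by (intro exI[of _ k2] exI[of _ "k1 * c - 1"]) auto
  then show False using indep by blast
qed



end
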